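(* Let $L$ be a frame, $X_L$ its Priestley space, and $Y_L$ the spatial part of $X_L$. Then $L$ is a Stone frame if and only if $X_L$ is a Stone L-space. If in addition $L$ is spatial, these conditions are equivalent to $Y_L$ being a Stone space.
   Context: A frame is a complete lattice satisfying $a\wedge\bigvee S=\bigvee\{a\wedge s\mid s\in S\}$. In a frame $L$, $a\ll b$ means whenever $b\le\bigvee S$ there is finite $T\subseteq S$ with $a\le\bigvee T$; $L$ is compact if $1\ll 1$. The pseudocomplement is $a^*=\bigvee\{x\mid a\wedge x=0\}$; $a$ is complemented if $a\vee a^*=1$. $L$ is zero-dimensional if each element is the join of the complemented elements below it; a Stone frame is a compact zero-dimensional frame. $L$ is spatial if completely prime filters separate its elements. A Priestley space is a Stone space $X$ with a partial order such that clopen upsets separate points. An L-space is a Priestley space in which the downset of each clopen set is clopen and the closure of each open upset is open. ${\sf ClopUp}(X)$ is the set of clopen upsets; $\mathrm{cl}$ denotes closure. The Priestley space $X_L$ is the set of prime filters of $L$ ordered by inclusion with topology generated by the sets $\varphi(a)=\{x\mid a\in x\}$ and their complements. The spatial part of $X$ is $Y=\{y\in X\mid{\downarrow}y\text{ clopen}\}$, topologized by declaring $V\subseteq Y$ open iff $V=U\cap Y$ for some $U\in{\sf ClopUp}(X)$. For $U,V\in{\sf ClopUp}(X)$, $V\ll U$ means that for every open upset $W$, $U\subseteq\mathrm{cl}\,W$ implies $V\subseteq W$; $\ker U=\bigcup\{V\in{\sf ClopUp}(X)\mid V\ll U\}$; $X$ is L-compact if $X=\ker X$. A biset is a set that is both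 an upset and a downset; ${\sf ClopBi}(X)$ is the set of clopen bisets; $\mathrm{cen}\,U=\bigcup\{V\in{\sf ClopBi}(X)\mid V\subseteq U\}$. A Stone L-space is an L-compact L-space with $\mathrm{cen}\,U$ dense in $U$ for each $U\in{\sf ClopUp}(X)$. A Stone space is a compact Hausdorff zero-dimensional space. *)

theory Defs
  imports "HOL-Analysis.Analysis"
begin

section \<open>Frames (the frame is the whole carrier type 'a :: complete_lattice)\<close>

definition frame :: "'a::complete_lattice itself \<Rightarrow> bool" where
  "frame (_::'a itself) \<longleftrightarrow> (\<forall>(a::'a) S. inf a (Sup S) = (SUP s\<in>S. inf a s))"

definition way_below :: "'a::complete_lattice \<Rightarrow> 'a \<Rightarrow> bool" where
  "way_below a b \<longleftrightarrow> (\<forall>S. b \<le> Sup S \<longrightarrow> (\<exists>T. finite T \<and> T \<subseteq> S \<and> a \<le> Sup T))"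

definition compact_frame :: "'a::complete_lattice itself \<Rightarrow> bool" where
  "compact_frame (_::'a itself) \<longleftrightarrow> way_below (top::'a) top"

definition pseudocompl :: "'a::complete_lattice \<Rightarrow> 'a" where
  "pseudocompl a = Sup {x. inf a x = bot}"

definition complemented :: "'a::complete_lattice \<Rightarrow> bool" where
  "complemented a \<longleftrightarrow> sup a (pseudocompl a) = top"

definition zero_dim_frame :: "'a::complete_lattice itself \<Rightarrow> bool" where
  "zero_dim_frame (_::'a itself) \<longleftrightarrow> (\<forall>a::'a. a = Sup {c. complemented c \<and> c \<le> a})"

definition stone_frame :: "'a::complete_lattice itself \<Rightarrow> bool" where
  "stone_frame T \<longleftrightarrow> compact_frame T \<and> zero_dim_frame T"

definition is_filter :: "'a::complete_lattice set \<Rightarrow> bool" where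
  "is_filter F \<longleftrightarrow> top \<in> F \<and> (\<forall>a\<in>F. \<forall>b. a \<le> b \<longrightarrow> b \<in> F) \<and> (\<forall>a\<in>F. \<forall>b\<in>F. inf a b \<in> F)"

definition prime_filter :: "'a::complete_lattice set \<Rightarrow> bool" where
  "prime_filter F \<longleftrightarrow> is_filter F \<and> bot \<notin> F \<and> (\<forall>a b. sup a b \<in> F \<longrightarrow> a \<in> F \<or> b \<in> F)"

definition completely_prime_filter :: "'a::complete_lattice set \<Rightarrow> bool" where
  "completely_prime_filter F \<longleftrightarrow> is_filter F \<and> bot \<notin> F \<and> (\<forall>S. Sup S \<in> F \<longrightarrow> (\<exists>s\<in>S. s \<in> F))"

definition spatial_frame :: "'a::complete_lattice itself \<Rightarrow> bool" where
  "spatial_frame (_::'a itself) \<longleftrightarrow>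
     (\<forall>a b::'a. a \<noteq> b \<longrightarrow> (\<exists>F. completely_prime_filter F \<and> (a \<in> F \<longleftrightarrow> b \<notin> F)))"

definition clopen :: "'p topology \<Rightarrow> 'p set \<Rightarrow> bool" where
  "clopen T U \<longleftrightarrow> openin T U \<and> closedin T U"

definition upset :: "'p topology \<Rightarrow> ('p \<Rightarrow> 'p \<Rightarrow> bool) \<Rightarrow> 'p set \<Rightarrow> bool" where
  "upset T le U \<longleftrightarrow> U \<subseteq> topspace T \<and> (\<forall>x\<in>U. \<forall>y\<in>topspace T. le x y \<longrightarrow> y \<in> U)"

definition downset :: "'p topology \<Rightarrow> ('p \<Rightarrow> 'p \<Rightarrow> bool) \<Rightarrow> 'p set \<Rightarrow> bool" where
  "downset T le U \<longleftrightarrow> U \<subseteq> topspace T \<and> (\<forall>x\<in>U. \<forall>y\<in>topspace T. le y x \<longrightarrow> y \<in> U)"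

definition down :: "'p topology \<Rightarrow> ('p \<Rightarrow> 'p \<Rightarrow> bool) \<Rightarrow> 'p set \<Rightarrow> 'p set" where
  "down T le A = {y \<in> topspace T. \<exists>x\<in>A. le y x}"

definition ClopUp :: "'p topology \<Rightarrow> ('p \<Rightarrow> 'p \<Rightarrow> bool) \<Rightarrow> 'p set set" where
  "ClopUp T le = {U. clopen T U \<and> upset T le U}"

definition ClopBi :: "'p topology \<Rightarrow> ('p \<Rightarrow> 'p \<Rightarrow> bool) \<Rightarrow> 'p set set" where
  "ClopBi T le = {U. clopen T U \<and> upset T le U \<and> downset T le U}"

definition stone_space :: "'p topology \<Rightarrow> bool" where
  "stone_space T \<longleftrightarrow> compact_space T \<and> Hausdorff_space T \<and> T dim_le 0"

definition partial_order_on_space :: "'p topology \<Rightarrow> ('p \<Rightarrow> 'p \<Rightarrow> bool) \<Rightarrow> bool" where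
  "partial_order_on_space T le \<longleftrightarrow>
     (\<forall>x\<in>topspace T. le x x) \<and>
     (\<forall>x\<in>topspace T. \<forall>y\<in>topspace T. le x y \<and> le y x \<longrightarrow> x = y) \<and>
     (\<forall>x\<in>topspace T. \<forall>y\<in>topspace T. \<forall>z\<in>topspace T. le x y \<and> le y z \<longrightarrow> le x z)"

definition priestley_space :: "'p topology \<Rightarrow> ('p \<Rightarrow> 'p \<Rightarrow> bool) \<Rightarrow> bool" where
  "priestley_space T le \<longleftrightarrow> stone_space T \<and> partial_order_on_space T le \<and>
     (\<forall>x\<in>topspace T. \<forall>y\<in>topspace T. \<not> le x y \<longrightarrow> (\<exists>U\<in>ClopUp T le. x \<in> U \<and> y \<notin> U))"

definition L_space :: "'p topology \<Rightarrow> ('p \<Rightarrow> 'p \<Rightarrow> bool) \<Rightarrow> bool" where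
  "L_space T le \<longleftrightarrow> priestley_space T le \<and>
     (\<forall>U. clopen T U \<longrightarrow> clopen T (down T le U)) \<and>
     (\<forall>W. openin T W \<and> upset T le W \<longrightarrow> openin T (T closure_of W))"

definition way_below_sp :: "'p topology \<Rightarrow> ('p \<Rightarrow> 'p \<Rightarrow> bool) \<Rightarrow> 'p set \<Rightarrow> 'p set \<Rightarrow> bool" where
  "way_below_sp T le V U \<longleftrightarrow>
     (\<forall>W. openin T W \<and> upset T le W \<and> U \<subseteq> T closure_of W \<longrightarrow> V \<subseteq> W)"

definition ker :: "'p topology \<Rightarrow> ('p \<Rightarrow> 'p \<Rightarrow> bool) \<Rightarrow> 'p set \<Rightarrow> 'p set" where
  "ker T le U = \<Union>{V \<in> ClopUp T le. way_below_sp T le V U}"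

definition L_compact :: "'p topology \<Rightarrow> ('p \<Rightarrow> 'p \<Rightarrow> bool) \<Rightarrow> bool" where
  "L_compact T le \<longleftrightarrow> topspace T = ker T le (topspace T)"

definition cen :: "'p topology \<Rightarrow> ('p \<Rightarrow> 'p \<Rightarrow> bool) \<Rightarrow> 'p set \<Rightarrow> 'p set" where
  "cen T le U = \<Union>{V \<in> ClopBi T le. V \<subseteq> U}"

definition stone_L_space :: "'p topology \<Rightarrow> ('p \<Rightarrow> 'p \<Rightarrow> bool) \<Rightarrow> bool" where
  "stone_L_space T le \<longleftrightarrow> L_space T le \<and> L_compact T le \<and>
     (\<forall>U\<in>ClopUp T le. cen T le U \<subseteq> U \<and> U \<subseteq> T closure_of (cen T le U))"

definition phi :: "'a::complete_lattice \<Rightarrow> 'a set set" where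
  "phi a = {x. prime_filter x \<and> a \<in> x}"

definition XL_points :: "'a::complete_lattice itself \<Rightarrow> 'a set set" where
  "XL_points (_::'a itself) = {x::'a set. prime_filter x}"

definition XL :: "'a::complete_lattice itself \<Rightarrow> 'a set topology" where
  "XL A = topology_generated_by ((\<lambda>a. phi a) ` UNIV \<union> (\<lambda>a. XL_points A - phi a) ` UNIV)"

definition spatial_points :: "'p topology \<Rightarrow> ('p \<Rightarrow> 'p \<Rightarrow> bool) \<Rightarrow> 'p set" where
  "spatial_points T le = {y \<in> topspace T. clopen T (down T le {y})}"

text \<open>Topology on the spatial part: opens are the traces of clopen upsets
  (taken as generating family; for X_L it is already a topology).\<close>
definition spatial_part :: "'p topology \<Rightarrow> ('p \<Rightarrow> 'p \<Rightarrow> bool) \<Rightarrow> 'p topology" where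
  "spatial_part T le = topology_generated_by ((\<lambda>U. U \<inter> spatial_points T le) ` ClopUp T le)"

end

theory Submission
  imports Defs
begin

lemma frame_dist: "frame TYPE('a::complete_lattice) \<Longrightarrow> inf (a::'a) (Sup S) = (SUP s\<in>S. inf a s)"
  unfolding frame_def by blast

lemma frame_dist2: "frame TYPE('a::complete_lattice) \<Longrightarrow> inf (a::'a) (sup b c) = sup (inf a b) (inf a c)"
  using frame_dist[of a "{b,c}"] by simp

lemma frame_imp: assumes "frame TYPE('a::complete_lattice)"
  shows "inf (c::'a) a \<le> b \<longleftrightarrow> c \<le> Sup {x. inf x a \<le> b}"
proof
  assume "inf c a \<le> b" then show "c \<le> Sup {x. inf x a \<le> b}" by (simp add: Sup_upper)
next
  assume h: "c \<le> Sup {x. inf x a \<le> b}"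
  have "inf c a \<le> inf a (Sup {x. inf x a \<le> b})" using h by (simp add: inf.coboundedI2 le_infI1 inf_commute)
  also have "\<dots> = (SUP x\<in>{x. inf x a \<le> b}. inf a x)" using frame_dist[OF assms] by blast
  also have "\<dots> \<le> b" by (auto intro!: SUP_least simp: inf_commute)
  finally show "inf c a \<le> b" .
qed

lemma pf_filter: "prime_filter p \<Longrightarrow> is_filter p" by (simp add: prime_filter_def)
lemma pf_top: "prime_filter p \<Longrightarrow> top \<in> p" by (simp add: prime_filter_def is_filter_def)
lemma pf_up: "prime_filter p \<Longrightarrow> a \<in> p \<Longrightarrow> a \<le> b \<Longrightarrow> b \<in> p"
  by (auto simp add: prime_filter_def is_filter_def)
lemma pf_bot: "prime_filter p \<Longrightarrow> bot \<notin> p" by (simp add: prime_filter_def)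
lemma pf_inf: "prime_filter p \<Longrightarrow> inf a b \<in> p \<longleftrightarrow> a \<in> p \<and> b \<in> p"
  by (auto simp add: prime_filter_def is_filter_def)
lemma pf_sup: "prime_filter p \<Longrightarrow> sup a b \<in> p \<longleftrightarrow> a \<in> p \<or> b \<in> p"
  by (auto simp add: prime_filter_def is_filter_def)
lemma pf_Inf: assumes "prime_filter p" "finite A" "A \<subseteq> p" shows "Inf A \<in> p"
  using assms(2,1,3) by (induction A rule: finite_induct) (auto simp: pf_top pf_inf)
lemma pf_Sup: assumes "prime_filter p" "finite A" "Sup A \<in> p" shows "\<exists>a\<in>A. a \<in> p"
  using assms(2,1,3) by (induction A rule: finite_induct) (auto simp: pf_bot pf_sup)
lemma pf_Sup2: "prime_filter p \<Longrightarrow> a \<in> A \<Longrightarrow> a \<in> p \<Longrightarrow> Sup A \<in> p"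
  by (meson Sup_upper pf_up)

lemma phi_sub: "phi (a::'a::complete_lattice) \<subseteq> XL_points TYPE('a)"
  by (auto simp: phi_def XL_points_def)
lemma phi_top: "phi (top::'a::complete_lattice) = XL_points TYPE('a)"
  by (auto simp: phi_def XL_points_def pf_top)
lemma phi_bot: "phi (bot::'a::complete_lattice) = {}"
  by (auto simp: phi_def pf_bot)
lemma phi_inf: "phi (inf a b) = phi a \<inter> phi b"
  by (auto simp: phi_def pf_inf)
lemma phi_sup: "phi (sup a b) = phi a \<union> phi b"
  by (auto simp: phi_def pf_sup)
lemma phi_mono: "a \<le> b \<Longrightarrow> phi a \<subseteq> phi b"
  by (auto simp: phi_def pf_up)
lemma phi_Sup_fin: "finite A \<Longrightarrow> phi (Sup A) = (\<Union>a\<in>A. phi a)"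
  by (auto simp: phi_def dest: pf_Sup intro: pf_Sup2)

definition downcl :: "'a::complete_lattice set \<Rightarrow> bool" where
  "downcl I \<longleftrightarrow> bot \<in> I \<and> (\<forall>i\<in>I. \<forall>j. j \<le> i \<longrightarrow> j \<in> I) \<and> (\<forall>i\<in>I. \<forall>j\<in>I. sup i j \<in> I)"

lemma pf_thm:
  assumes fr: "frame TYPE('a::complete_lattice)"
    and F: "is_filter (F::'a set)" and I: "downcl I" and disj: "F \<inter> I = {}"
  shows "\<exists>p. prime_filter p \<and> F \<subseteq> p \<and> p \<inter> I = {}"
proof -
  define \<A> where "\<A> = {G. is_filter G \<and> F \<subseteq> G \<and> G \<inter> I = {}}"
  have "\<A> \<noteq> {}" using F disj unfolding \<A>_def by blast
  moreover have "\<Union>\<C> \<in> \<A>" if ne: "\<C> \<noteq> {}" and ch: "subset.chain \<A> \<C>" for \<C>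
  proof -
    have sub: "\<C> \<subseteq> \<A>" using ch by (simp add: subset_chain_def)
    obtain G0 where G0: "G0 \<in> \<C>" using ne by blast
    have "top \<in> \<Union>\<C>" using G0 sub unfolding \<A>_def is_filter_def by blast
    moreover have "\<forall>a\<in>\<Union>\<C>. \<forall>b. a \<le> b \<longrightarrow> b \<in> \<Union>\<C>" using sub unfolding \<A>_def is_filter_def by blast
    moreover have "\<forall>a\<in>\<Union>\<C>. \<forall>b\<in>\<Union>\<C>. inf a b \<in> \<Union>\<C>"
    proof (intro ballI)
      fix a b assume "a \<in> \<Union>\<C>" "b \<in> \<Union>\<C>"
      then obtain A B where AB: "A \<in> \<C>" "B \<in> \<C>" "a \<in> A" "b \<in> B" by blast
      then have "A \<subseteq> B \<or> B \<subseteq> A" using ch by (auto simp: subset_chain_def)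
      then show "inf a b \<in> \<Union>\<C>" using AB sub unfolding \<A>_def is_filter_def by blast
    qed
    ultimately have "is_filter (\<Union>\<C>)" by (simp add: is_filter_def)
    then show ?thesis using G0 sub unfolding \<A>_def by blast
  qed
  ultimately obtain G where G: "G \<in> \<A>" and max: "\<forall>H\<in>\<A>. G \<subseteq> H \<longrightarrow> H = G"
    using subset_Zorn_nonempty[of \<A>] by blast
  have Gf: "is_filter G" and FG: "F \<subseteq> G" and GI: "G \<inter> I = {}" using G by (auto simp: \<A>_def)
  have ext: "\<exists>g\<in>G. \<exists>i\<in>I. inf g a \<le> i" if "a \<notin> G" for a
  proof (rule ccontr)
    assume nex: "\<not> ?thesis"
    define H where "H = {x. \<exists>g\<in>G. inf g a \<le> x}"
    have "is_filter H" unfolding H_def is_filter_def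
    proof (intro conjI ballI allI impI)
      show "top \<in> {x. \<exists>g\<in>G. inf g a \<le> x}" using Gf by (auto simp: is_filter_def)
    next
      fix x y assume "x \<in> {x. \<exists>g\<in>G. inf g a \<le> x}" "x \<le> y"
      then show "y \<in> {x. \<exists>g\<in>G. inf g a \<le> x}" by (auto intro: order_trans)
    next
      fix x y assume "x \<in> {x. \<exists>g\<in>G. inf g a \<le> x}" "y \<in> {x. \<exists>g\<in>G. inf g a \<le> x}"
      then obtain g1 g2 where "g1 \<in> G" "g2 \<in> G" "inf g1 a \<le> x" "inf g2 a \<le> y" by auto
      moreover have "inf (inf g1 g2) a \<le> inf x y" using calculation
        by (meson inf_le1 inf_le2 inf_mono le_inf_iff order_trans)
      moreover have "inf g1 g2 \<in> G" using calculation Gf by (auto simp: is_filter_def)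
      ultimately show "inf x y \<in> {x. \<exists>g\<in>G. inf g a \<le> x}" by blast
    qed
    moreover have "G \<subseteq> H" unfolding H_def using inf_le1 by blast
    moreover have "H \<inter> I = {}" using nex I unfolding H_def downcl_def by blast
    moreover have "a \<in> H" using Gf unfolding H_def is_filter_def by (metis inf_top_left mem_Collect_eq order_refl)
    ultimately show False using max FG that unfolding \<A>_def by blast
  qed
  have "prime_filter G" unfolding prime_filter_def
  proof (intro conjI allI impI Gf)
    show "bot \<notin> G" using GI I by (auto simp: downcl_def)
  next
    fix a b assume ab: "sup a b \<in> G"
    show "a \<in> G \<or> b \<in> G"
    proof (rule ccontr)
      assume "\<not> (a \<in> G \<or> b \<in> G)"
      then obtain g1 i1 g2 i2 where g: "g1 \<in> G" "i1 \<in> I" "inf g1 a \<le> i1" "g2 \<in> G" "i2 \<in> I" "inf g2 b \<le> i2"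
        using ext by meson
      define g where "g = inf g1 g2"
      have gG: "g \<in> G" using g Gf by (auto simp: g_def is_filter_def)
      have "inf g (sup a b) \<in> G" using gG ab Gf by (auto simp: is_filter_def)
      moreover have "inf g (sup a b) = sup (inf g a) (inf g b)" using frame_dist2[OF fr] by blast
      moreover have "sup (inf g a) (inf g b) \<le> sup i1 i2" using g unfolding g_def
        by (meson inf_le1 inf_le2 le_infI1 le_infI2 le_inf_iff order_trans sup_mono inf_mono order_refl)
      moreover have "sup i1 i2 \<in> I" using g I by (auto simp: downcl_def)
      ultimately have "sup i1 i2 \<in> G" using Gf unfolding is_filter_def by metis
      then show False using GI \<open>sup i1 i2 \<in> I\<close> by blast
    qed
  qed
  then show ?thesis using FG GI by blast
qed

lemma pf_sep:
  assumes fr: "frame TYPE('a::complete_lattice)" and nle: "\<not> (a::'a) \<le> b"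
  shows "\<exists>p. prime_filter p \<and> a \<in> p \<and> b \<notin> p"
proof -
  have "is_filter {x. a \<le> x}" by (auto simp: is_filter_def)
  moreover have "downcl {x. x \<le> b}" by (auto simp: downcl_def)
  moreover have "{x. a \<le> x} \<inter> {x. x \<le> b} = {}" using nle by (auto intro: order_trans)
  ultimately obtain p where "prime_filter p" "{x. a \<le> x} \<subseteq> p" "p \<inter> {x. x \<le> b} = {}"
    using pf_thm[OF fr] by blast
  then show ?thesis by auto
qed

lemma pf_le:
  assumes fr: "frame TYPE('a::complete_lattice)" and h: "\<And>p. prime_filter p \<Longrightarrow> (a::'a) \<in> p \<Longrightarrow> b \<in> p"
  shows "a \<le> b"
  using pf_sep[OF fr, of a b] h by blast

lemma phi_le: "frame TYPE('a::complete_lattice) \<Longrightarrow> phi (a::'a) \<subseteq> phi b \<Longrightarrow> a \<le> b"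
  by (rule pf_le) (auto simp: phi_def)

lemma subbase_conv:
  assumes S: "\<Union>S \<in> S"
  shows "(finite intersection_of (\<lambda>x. x \<in> S) relative_to \<Union>S) = (finite' intersection_of (\<lambda>x. x \<in> S))"
proof (intro ext iffI)
  fix T assume "(finite intersection_of (\<lambda>x. x \<in> S) relative_to \<Union>S) T"
  then obtain U where U: "finite U" "U \<subseteq> S" "\<Union>S \<inter> \<Inter>U = T"
    unfolding relative_to_def intersection_of_def by blast
  have 1: "finite (insert (\<Union>S) U)" using U(1) by simp
  have 2: "insert (\<Union>S) U \<subseteq> Collect (\<lambda>x. x \<in> S)" using U(2) S by simp
  have 3: "\<Inter>(insert (\<Union>S) U) = T" using U(3) by simp
  show "(finite' intersection_of (\<lambda>x. x \<in> S)) T"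
    unfolding intersection_of_def using 1 2 3 by blast
next
  fix T assume "(finite' intersection_of (\<lambda>x. x \<in> S)) T"
  then obtain U where U: "finite U" "U \<noteq> {}" "U \<subseteq> Collect (\<lambda>x. x \<in> S)" "\<Inter>U = T"
    unfolding intersection_of_def by blast
  obtain u where u: "u \<in> U" using U(2) by blast
  have "\<Inter>U \<subseteq> u" using u by (rule Inter_lower)
  also have "u \<subseteq> \<Union>S" using u U(3) by blast
  finally have "\<Union>S \<inter> \<Inter>U = T" using U(4) by blast
  then show "(finite intersection_of (\<lambda>x. x \<in> S) relative_to \<Union>S) T"
    unfolding relative_to_def intersection_of_def using U(1,3) by blast
qed

lemma generated_eq_subbase:
  assumes "\<Union>S \<in> S"
  shows "topology (arbitrary union_of (finite intersection_of (\<lambda>x. x \<in> S) relative_to \<Union>S)) = topology_generated_by S"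
  unfolding topology_eq openin_subbase openin_topology_generated_by_iff generate_topology_on_eq
    subbase_conv[OF assms] by simp

abbreviation XLS :: "'a::complete_lattice itself \<Rightarrow> 'a set set set" where
  "XLS A \<equiv> (\<lambda>a. phi a) ` UNIV \<union> (\<lambda>a. XL_points A - phi a) ` UNIV"

lemma XLS_Union: "\<Union>(XLS TYPE('a::complete_lattice)) = XL_points TYPE('a)"
  using phi_sub[where 'a='a] phi_top[where 'a='a] by blast

lemma XL_topspace[simp]: "topspace (XL TYPE('a::complete_lattice)) = XL_points TYPE('a)"
  unfolding XL_def topology_generated_by_topspace using XLS_Union by metis

lemma XL_open_phi: "openin (XL TYPE('a::complete_lattice)) (phi (a::'a))"
  unfolding XL_def by (rule topology_generated_by_Basis) blast

lemma XL_open_cphi: "openin (XL TYPE('a::complete_lattice)) (XL_points TYPE('a) - phi (a::'a))"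
  unfolding XL_def by (rule topology_generated_by_Basis) blast

lemma XL_closed_phi: "closedin (XL TYPE('a::complete_lattice)) (phi (a::'a))"
  unfolding closedin_def using XL_open_cphi[of a] phi_sub[of a] by simp

lemma XL_closed_cphi: "closedin (XL TYPE('a::complete_lattice)) (XL_points TYPE('a) - phi (a::'a))"
proof -
  have "XL_points TYPE('a) - (XL_points TYPE('a) - phi a) = phi a" using phi_sub[of a] by blast
  then show ?thesis unfolding closedin_def using XL_open_phi[of a] by simp
qed

lemma XL_clopen_phi: "clopen (XL TYPE('a::complete_lattice)) (phi (a::'a))"
  by (simp add: clopen_def XL_open_phi XL_closed_phi)

lemma XL_open_basic: "openin (XL TYPE('a::complete_lattice)) (phi (a::'a) - phi b)"
proof -
  have "phi a - phi b = phi a \<inter> (XL_points TYPE('a) - phi b)" using phi_sub[of a] by blast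
  then show ?thesis using XL_open_phi XL_open_cphi by (metis openin_Int)
qed

lemma XL_closed_basic: "closedin (XL TYPE('a::complete_lattice)) (phi (a::'a) - phi b)"
proof -
  have "phi a - phi b = phi a \<inter> (XL_points TYPE('a) - phi b)" using phi_sub[of a] by blast
  then show ?thesis using XL_closed_phi XL_closed_cphi by (metis closedin_Int)
qed

lemma XL_openin:
  "openin (XL TYPE('a::complete_lattice)) U \<longleftrightarrow>
     U \<subseteq> XL_points TYPE('a) \<and> (\<forall>x\<in>U. \<exists>a b::'a. x \<in> phi a - phi b \<and> phi a - phi b \<subseteq> U)"
proof
  assume o: "openin (XL TYPE('a)) U"
  have "U \<subseteq> XL_points TYPE('a)" using openin_subset[OF o] by simp
  moreover have "generate_topology_on (XLS TYPE('a)) U" using o unfolding XL_def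
    by (rule openin_topology_generated_by)
  then have "\<forall>x\<in>U. \<exists>a b::'a. x \<in> phi a - phi b \<and> phi a - phi b \<subseteq> U"
  proof induction
    case Empty then show ?case by simp
  next
    case (Int u v)
    show ?case
    proof
      fix x assume "x \<in> u \<inter> v"
      then obtain a1 b1 a2 b2 :: 'a where "x \<in> phi a1 - phi b1" "phi a1 - phi b1 \<subseteq> u"
        "x \<in> phi a2 - phi b2" "phi a2 - phi b2 \<subseteq> v" using Int.IH by blast
      then show "\<exists>a b::'a. x \<in> phi a - phi b \<and> phi a - phi b \<subseteq> u \<inter> v"
        by (intro exI[of _ "inf a1 a2"] exI[of _ "sup b1 b2"]) (auto simp: phi_inf phi_sup)
    qed
  next
    case (UN K) then show ?case by blast
  next
    case (Basis s)
    then obtain a::'a where "s = phi a \<or> s = XL_points TYPE('a) - phi a" by blast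
    then show ?case
    proof
      assume "s = phi a" then show ?thesis
        by (intro ballI exI[of _ a] exI[of _ "bot::'a"]) (auto simp: phi_bot)
    next
      assume "s = XL_points TYPE('a) - phi a" then show ?thesis
        by (intro ballI exI[of _ "top::'a"] exI[of _ a]) (auto simp: phi_top)
    qed
  qed
  ultimately show "U \<subseteq> XL_points TYPE('a) \<and> (\<forall>x\<in>U. \<exists>a b::'a. x \<in> phi a - phi b \<and> phi a - phi b \<subseteq> U)" by blast
next
  assume h: "U \<subseteq> XL_points TYPE('a) \<and> (\<forall>x\<in>U. \<exists>a b::'a. x \<in> phi a - phi b \<and> phi a - phi b \<subseteq> U)"
  have eq: "U = \<Union>{V. \<exists>a b::'a. V = phi a - phi b \<and> V \<subseteq> U}" using h by blast
  have op: "openin (XL TYPE('a)) (\<Union>{V. \<exists>a b::'a. V = phi a - phi b \<and> V \<subseteq> U})"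
    by (rule openin_Union) (auto intro: XL_open_basic)
  show "openin (XL TYPE('a)) U" by (subst eq) (rule op)
qed

lemma XL_compact:
  assumes fr: "frame TYPE('a::complete_lattice)"
  shows "compact_space (XL TYPE('a))"
proof (rule Alexander_subbase[where \<B> = "XLS TYPE('a)"])
  have "\<Union>(XLS TYPE('a)) \<in> XLS TYPE('a)" using XLS_Union[where 'a='a] phi_top[where 'a='a] by (metis UnI1 rangeI)
  then show "topology (arbitrary union_of (finite intersection_of (\<lambda>x. x \<in> XLS TYPE('a)) relative_to \<Union>(XLS TYPE('a)))) = XL TYPE('a)"
    unfolding XL_def by (rule generated_eq_subbase)
next
  fix C assume C: "C \<subseteq> XLS TYPE('a)" "\<Union>C = topspace (XL TYPE('a))"
  define A where "A = {a::'a. phi a \<in> C}"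
  define B where "B = {b::'a. XL_points TYPE('a) - phi b \<in> C}"
  have "\<exists>A0 B0. finite A0 \<and> A0 \<subseteq> A \<and> finite B0 \<and> B0 \<subseteq> B \<and> Inf B0 \<le> Sup A0"
  proof (rule ccontr)
    assume nex: "\<not> ?thesis"
    define F where "F = {x. \<exists>B0. finite B0 \<and> B0 \<subseteq> B \<and> Inf B0 \<le> x}"
    define I where "I = {x. \<exists>A0. finite A0 \<and> A0 \<subseteq> A \<and> x \<le> Sup A0}"
    have "is_filter F" unfolding is_filter_def F_def
    proof (intro conjI ballI allI impI)
      show "top \<in> {x. \<exists>B0. finite B0 \<and> B0 \<subseteq> B \<and> Inf B0 \<le> x}" by (auto intro!: exI[of _ "{}"])
    next
      fix a b assume "a \<in> {x. \<exists>B0. finite B0 \<and> B0 \<subseteq> B \<and> Inf B0 \<le> x}" "a \<le> b"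
      then show "b \<in> {x. \<exists>B0. finite B0 \<and> B0 \<subseteq> B \<and> Inf B0 \<le> x}" by (auto intro: order_trans)
    next
      fix a b assume "a \<in> {x. \<exists>B0. finite B0 \<and> B0 \<subseteq> B \<and> Inf B0 \<le> x}" "b \<in> {x. \<exists>B0. finite B0 \<and> B0 \<subseteq> B \<and> Inf B0 \<le> x}"
      then obtain B1 B2 where "finite B1" "B1 \<subseteq> B" "Inf B1 \<le> a" "finite B2" "B2 \<subseteq> B" "Inf B2 \<le> b" by auto
      then show "inf a b \<in> {x. \<exists>B0. finite B0 \<and> B0 \<subseteq> B \<and> Inf B0 \<le> x}"
        by (intro CollectI exI[of _ "B1 \<union> B2"]) (simp add: Inf_union_distrib le_infI1 le_infI2)
    qed
    moreover have "downcl I" unfolding downcl_def I_def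
    proof (intro conjI ballI allI impI)
      show "bot \<in> {x. \<exists>A0. finite A0 \<and> A0 \<subseteq> A \<and> x \<le> Sup A0}" by (auto intro!: exI[of _ "{}"])
    next
      fix a b assume "a \<in> {x. \<exists>A0. finite A0 \<and> A0 \<subseteq> A \<and> x \<le> Sup A0}" "b \<le> a"
      then show "b \<in> {x. \<exists>A0. finite A0 \<and> A0 \<subseteq> A \<and> x \<le> Sup A0}" by (auto intro: order_trans)
    next
      fix a b assume "a \<in> {x. \<exists>A0. finite A0 \<and> A0 \<subseteq> A \<and> x \<le> Sup A0}" "b \<in> {x. \<exists>A0. finite A0 \<and> A0 \<subseteq> A \<and> x \<le> Sup A0}"
      then obtain A1 A2 where "finite A1" "A1 \<subseteq> A" "a \<le> Sup A1" "finite A2" "A2 \<subseteq> A" "b \<le> Sup A2" by auto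
      then show "sup a b \<in> {x. \<exists>A0. finite A0 \<and> A0 \<subseteq> A \<and> x \<le> Sup A0}"
        by (intro CollectI exI[of _ "A1 \<union> A2"]) (simp add: Sup_union_distrib le_supI1 le_supI2)
    qed
    moreover have "F \<inter> I = {}"
    proof (rule ccontr)
      assume "F \<inter> I \<noteq> {}"
      then obtain x B0 A0 where "finite B0" "B0 \<subseteq> B" "Inf B0 \<le> x" "finite A0" "A0 \<subseteq> A" "x \<le> Sup A0"
        unfolding F_def I_def by blast
      moreover have "Inf B0 \<le> Sup A0" using calculation order_trans by blast
      ultimately show False using nex by blast
    qed
    ultimately obtain p where p: "prime_filter p" "F \<subseteq> p" "p \<inter> I = {}" using pf_thm[OF fr] by blast
    then have "p \<in> \<Union>C" using C by (simp add: XL_points_def)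
    then obtain c where c: "c \<in> C" "p \<in> c" by blast
    then obtain a::'a where "c = phi a \<or> c = XL_points TYPE('a) - phi a" using C by blast
    then show False
    proof
      assume "c = phi a"
      then have "a \<in> A" "a \<in> p" using c by (auto simp: A_def phi_def)
      then have "a \<in> I" unfolding I_def by (auto intro!: exI[of _ "{a}"])
      then show False using p \<open>a \<in> p\<close> by blast
    next
      assume "c = XL_points TYPE('a) - phi a"
      then have "a \<in> B" "a \<notin> p" using c p by (auto simp: B_def phi_def)
      then have "a \<in> F" unfolding F_def by (auto intro!: exI[of _ "{a}"])
      then show False using p \<open>a \<notin> p\<close> by blast
    qed
  qed
  then obtain A0 B0 where AB: "finite A0" "A0 \<subseteq> A" "finite B0" "B0 \<subseteq> B" "Inf B0 \<le> Sup A0" by blast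
  define C' where "C' = phi ` A0 \<union> (\<lambda>b. XL_points TYPE('a) - phi b) ` B0"
  show "\<exists>C'. finite C' \<and> C' \<subseteq> C \<and> \<Union>C' = topspace (XL TYPE('a))"
  proof (intro exI conjI)
    show "finite C'" using AB by (simp add: C'_def)
    show "C' \<subseteq> C" using AB by (auto simp: C'_def A_def B_def)
    then have "\<Union>C' \<subseteq> topspace (XL TYPE('a))" using C by blast
    moreover have "topspace (XL TYPE('a)) \<subseteq> \<Union>C'"
    proof
      fix p assume "p \<in> topspace (XL TYPE('a))"
      then have p: "prime_filter p" by (simp add: XL_points_def)
      show "p \<in> \<Union>C'"
      proof (cases "B0 \<subseteq> p")
        case True
        then have "Inf B0 \<in> p" using pf_Inf p AB by blast
        then have "Sup A0 \<in> p" using pf_up p AB by blast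
        then obtain a where "a \<in> A0" "a \<in> p" using pf_Sup p AB by blast
        then show ?thesis using p by (auto simp: C'_def phi_def)
      next
        case False
        then obtain b where "b \<in> B0" "b \<notin> p" by blast
        then show ?thesis using p by (auto simp: C'_def phi_def XL_points_def)
      qed
    qed
    ultimately show "\<Union>C' = topspace (XL TYPE('a))" by blast
  qed
qed

lemma compact_cover:
  assumes "compactin X K" "K \<subseteq> \<Union>(f ` A)" "\<And>a. a \<in> A \<Longrightarrow> openin X (f a)"
  shows "\<exists>A0\<subseteq>A. finite A0 \<and> K \<subseteq> \<Union>(f ` A0)"
proof -
  have "\<forall>U\<in>f ` A. openin X U" using assms(3) by blast
  then obtain F where F: "finite F" "F \<subseteq> f ` A" "K \<subseteq> \<Union>F"
    using assms(1,2) unfolding compactin_def by meson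
  then obtain A0 where "A0 \<subseteq> A" "finite A0" "F = f ` A0" using finite_subset_image by metis
  then show ?thesis using F by blast
qed

lemma XL_points_iff: "x \<in> XL_points TYPE('a::complete_lattice) \<longleftrightarrow> prime_filter (x::'a set)"
  by (simp add: XL_points_def)

lemma phi_iff: "x \<in> phi a \<longleftrightarrow> prime_filter x \<and> a \<in> x"
  by (simp add: phi_def)

lemma closed_down_sep:
  assumes fr: "frame TYPE('a::complete_lattice)"
    and C: "closedin (XL TYPE('a)) C" "downset (XL TYPE('a)) (\<subseteq>) C"
    and x: "x \<in> XL_points TYPE('a)" "x \<notin> C"
  shows "\<exists>c\<in>x. phi c \<inter> C = {}"
proof -
  have cC: "compactin (XL TYPE('a)) C" by (rule closedin_compact_space[OF XL_compact[OF fr] C(1)])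
  have CP: "C \<subseteq> XL_points TYPE('a)" using closedin_subset[OF C(1)] by simp
  have "C \<subseteq> \<Union>((\<lambda>a. XL_points TYPE('a) - phi a) ` x)"
  proof
    fix y assume y: "y \<in> C"
    have "\<not> x \<subseteq> y"
    proof
      assume "x \<subseteq> y"
      then have "x \<in> C" using C(2) y x(1) unfolding downset_def by simp
      then show False using x(2) by blast
    qed
    then obtain a where "a \<in> x" "a \<notin> y" by blast
    then show "y \<in> \<Union>((\<lambda>a. XL_points TYPE('a) - phi a) ` x)" using y CP by (auto simp: phi_iff)
  qed
  then obtain A0 where A0: "A0 \<subseteq> x" "finite A0" "C \<subseteq> \<Union>((\<lambda>a. XL_points TYPE('a) - phi a) ` A0)"
    using compact_cover[OF cC, of "\<lambda>a. XL_points TYPE('a) - phi a" x] XL_open_cphi by blast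
  have px: "prime_filter x" using x(1) by (simp add: XL_points_iff)
  have "Inf A0 \<in> x" using pf_Inf[OF px A0(2,1)] .
  moreover have "phi (Inf A0) \<inter> C = {}"
  proof (rule ccontr)
    assume "phi (Inf A0) \<inter> C \<noteq> {}"
    then obtain p where p: "p \<in> phi (Inf A0)" "p \<in> C" by blast
    then obtain a where a: "a \<in> A0" "p \<notin> phi a" using A0(3) by blast
    have "Inf A0 \<le> a" using a(1) by (rule Inf_lower)
    then have "p \<in> phi a" using p(1) phi_mono by blast
    then show False using a(2) by blast
  qed
  ultimately show ?thesis by blast
qed

lemma open_up_phi:
  assumes fr: "frame TYPE('a::complete_lattice)"
    and W: "openin (XL TYPE('a)) W" "upset (XL TYPE('a)) (\<subseteq>) W" and x: "x \<in> W"
  shows "\<exists>c::'a. x \<in> phi c \<and> phi c \<subseteq> W"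
proof -
  define C where "C = XL_points TYPE('a) - W"
  have WP: "W \<subseteq> XL_points TYPE('a)" using openin_subset[OF W(1)] by simp
  have "XL_points TYPE('a) - C = W" using WP by (auto simp: C_def)
  then have "closedin (XL TYPE('a)) C" unfolding closedin_def using W(1) by (simp add: C_def)
  moreover have "downset (XL TYPE('a)) (\<subseteq>) C"
    using W(2) unfolding downset_def upset_def C_def by auto
  moreover have "x \<in> XL_points TYPE('a)" "x \<notin> C" using x WP by (auto simp: C_def)
  ultimately obtain c where c: "c \<in> x" "phi c \<inter> C = {}" using closed_down_sep[OF fr] by blast
  have "phi c \<subseteq> W" using c(2) phi_sub[of c] by (auto simp: C_def)
  moreover have "x \<in> phi c" using c(1) \<open>x \<in> XL_points TYPE('a)\<close> by (simp add: phi_iff XL_points_iff)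
  ultimately show ?thesis by blast
qed

lemma open_up_Union:
  assumes fr: "frame TYPE('a::complete_lattice)"
    and W: "openin (XL TYPE('a)) W" "upset (XL TYPE('a)) (\<subseteq>) W"
  shows "W = \<Union>(phi ` {c::'a. phi c \<subseteq> W})"
  using open_up_phi[OF fr W] by blast

lemma clopen_up_phi:
  assumes fr: "frame TYPE('a::complete_lattice)"
    and U: "clopen (XL TYPE('a)) U" "upset (XL TYPE('a)) (\<subseteq>) U"
  shows "\<exists>c::'a. U = phi c"
proof -
  have o: "openin (XL TYPE('a)) U" and cl: "closedin (XL TYPE('a)) U" using U(1) by (auto simp: clopen_def)
  have cU: "compactin (XL TYPE('a)) U" by (rule closedin_compact_space[OF XL_compact[OF fr] cl])
  have "U \<subseteq> \<Union>(phi ` {c::'a. phi c \<subseteq> U})" using open_up_Union[OF fr o U(2)] by blast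
  then obtain A0 where A0: "A0 \<subseteq> {c::'a. phi c \<subseteq> U}" "finite A0" "U \<subseteq> \<Union>(phi ` A0)"
    using compact_cover[OF cU, of phi "{c::'a. phi c \<subseteq> U}"] XL_open_phi by blast
  have "phi (Sup A0) = \<Union>(phi ` A0)" using phi_Sup_fin[OF A0(2)] .
  then have "U = phi (Sup A0)" using A0 by blast
  then show ?thesis by blast
qed

lemma closure_phi:
  assumes fr: "frame TYPE('a::complete_lattice)"
  shows "(XL TYPE('a)) closure_of (\<Union>(phi ` A)) = phi (Sup (A::'a set))"
proof
  show "XL TYPE('a) closure_of \<Union> (phi ` A) \<subseteq> phi (Sup A)"
  proof (rule closure_of_minimal)
    show "\<Union> (phi ` A) \<subseteq> phi (Sup A)" using phi_mono Sup_upper by blast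
    show "closedin (XL TYPE('a)) (phi (Sup A))" by (rule XL_closed_phi)
  qed
next
  show "phi (Sup A) \<subseteq> XL TYPE('a) closure_of \<Union> (phi ` A)"
  proof
    fix x assume x: "x \<in> phi (Sup A)"
    have xP: "x \<in> XL_points TYPE('a)" using x phi_sub by blast
    have "\<exists>y\<in>\<Union>(phi ` A). y \<in> T" if T: "x \<in> T" "openin (XL TYPE('a)) T" for T
    proof (rule ccontr)
      assume nex: "\<not> ?thesis"
      obtain c d :: 'a where cd: "x \<in> phi c - phi d" "phi c - phi d \<subseteq> T"
        using T XL_openin by metis
      have "inf c a \<le> d" if a: "a \<in> A" for a
      proof (rule pf_le[OF fr])
        fix p assume p: "prime_filter p" "inf c a \<in> p"
        show "d \<in> p"
        proof (rule ccontr)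
          assume "d \<notin> p"
          then have "p \<in> phi c - phi d" "p \<in> phi a" using p by (auto simp: phi_iff pf_inf)
          then show False using nex cd a by blast
        qed
      qed
      then have "inf c (Sup A) \<le> d" using frame_dist[OF fr, of c A] by (simp add: SUP_least)
      moreover have "inf c (Sup A) \<in> x" using cd x by (auto simp: phi_iff pf_inf)
      ultimately have "d \<in> x" using x pf_up by (auto simp: phi_iff)
      then show False using cd by (auto simp: phi_iff)
    qed
    then show "x \<in> XL TYPE('a) closure_of \<Union> (phi ` A)"
      unfolding closure_of_def using xP by simp
  qed
qed

definition himp :: "'a::complete_lattice \<Rightarrow> 'a \<Rightarrow> 'a" where
  "himp a b = Sup {x. inf x a \<le> b}"

lemma gen_filter:
  assumes "is_filter y"
  shows "is_filter {z. \<exists>g\<in>y. inf g a \<le> z}"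
  unfolding is_filter_def
proof (intro conjI ballI allI impI)
  show "top \<in> {z. \<exists>g\<in>y. inf g a \<le> z}" using assms by (auto simp: is_filter_def)
next
  fix x z assume "x \<in> {z. \<exists>g\<in>y. inf g a \<le> z}" "x \<le> z"
  then show "z \<in> {z. \<exists>g\<in>y. inf g a \<le> z}" by (auto intro: order_trans)
next
  fix x z assume "x \<in> {z. \<exists>g\<in>y. inf g a \<le> z}" "z \<in> {z. \<exists>g\<in>y. inf g a \<le> z}"
  then obtain g1 g2 where g: "g1 \<in> y" "g2 \<in> y" "inf g1 a \<le> x" "inf g2 a \<le> z" by auto
  have "inf (inf g1 g2) a \<le> inf x z" using g
    by (meson inf_le1 inf_le2 inf_mono le_inf_iff order_trans)
  moreover have "inf g1 g2 \<in> y" using g assms by (auto simp: is_filter_def)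
  ultimately show "inf x z \<in> {z. \<exists>g\<in>y. inf g a \<le> z}" by blast
qed

lemma down_basic:
  assumes fr: "frame TYPE('a::complete_lattice)"
  shows "down (XL TYPE('a)) (\<subseteq>) (phi a - phi b) = XL_points TYPE('a) - phi (himp (a::'a) b)"
proof
  show "down (XL TYPE('a)) (\<subseteq>) (phi a - phi b) \<subseteq> XL_points TYPE('a) - phi (himp a b)"
  proof
    fix y assume "y \<in> down (XL TYPE('a)) (\<subseteq>) (phi a - phi b)"
    then obtain x where y: "y \<in> XL_points TYPE('a)" "x \<in> phi a" "x \<notin> phi b" "y \<subseteq> x"
      unfolding down_def by auto
    have "himp a b \<notin> y"
    proof
      assume "himp a b \<in> y"
      then have "himp a b \<in> x" using y by blast
      then have "inf (himp a b) a \<in> x" using y by (auto simp: phi_iff pf_inf)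
      moreover have "inf (himp a b) a \<le> b" using frame_imp[OF fr] unfolding himp_def by blast
      ultimately have "b \<in> x" using y pf_up by (auto simp: phi_iff)
      then show False using y by (auto simp: phi_iff)
    qed
    then show "y \<in> XL_points TYPE('a) - phi (himp a b)" using y by (auto simp: phi_iff)
  qed
next
  show "XL_points TYPE('a) - phi (himp a b) \<subseteq> down (XL TYPE('a)) (\<subseteq>) (phi a - phi b)"
  proof
    fix y assume y: "y \<in> XL_points TYPE('a) - phi (himp a b)"
    then have py: "prime_filter y" and ny: "himp a b \<notin> y" by (auto simp: XL_points_iff phi_iff)
    have F: "is_filter {z. \<exists>g\<in>y. inf g a \<le> z}" using gen_filter pf_filter[OF py] by blast
    have I: "downcl {z. z \<le> b}" by (auto simp: downcl_def)
    have "{z. \<exists>g\<in>y. inf g a \<le> z} \<inter> {z. z \<le> b} = {}"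
    proof (rule ccontr)
      assume "{z. \<exists>g\<in>y. inf g a \<le> z} \<inter> {z. z \<le> b} \<noteq> {}"
      then obtain g z where "g \<in> y" "inf g a \<le> z" "z \<le> b" by blast
      then have "g \<in> y" "inf g a \<le> b" by (auto intro: order_trans)
      then have "g \<le> himp a b" using frame_imp[OF fr] unfolding himp_def by blast
      then show False using \<open>g \<in> y\<close> ny py pf_up by blast
    qed
    then obtain p where p: "prime_filter p" "{z. \<exists>g\<in>y. inf g a \<le> z} \<subseteq> p" "p \<inter> {z. z \<le> b} = {}"
      using pf_thm[OF fr F I] by blast
    have "y \<subseteq> p" using p(2) inf_le1 by blast
    moreover have "a \<in> p" using p(2) pf_top[OF py] by (metis (mono_tags, lifting) inf_top_left mem_Collect_eq order_refl subsetD)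
    moreover have "b \<notin> p" using p(3) by blast
    ultimately show "y \<in> down (XL TYPE('a)) (\<subseteq>) (phi a - phi b)"
      unfolding down_def using py p(1) by (auto simp: XL_points_iff phi_iff)
  qed
qed

lemma down_clopen:
  assumes fr: "frame TYPE('a::complete_lattice)" and K: "clopen (XL TYPE('a)) K"
  shows "clopen (XL TYPE('a)) (down (XL TYPE('a)) (\<subseteq>) K)"
proof -
  have o: "openin (XL TYPE('a)) K" and cl: "closedin (XL TYPE('a)) K" using K by (auto simp: clopen_def)
  have cK: "compactin (XL TYPE('a)) K" by (rule closedin_compact_space[OF XL_compact[OF fr] cl])
  define f where "f = (\<lambda>(a::'a, b::'a). phi a - phi b)"
  define A where "A = {(a::'a, b::'a). phi a - phi b \<subseteq> K}"
  have "K \<subseteq> \<Union>(f ` A)"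
  proof
    fix x assume "x \<in> K"
    then obtain a b :: 'a where "x \<in> phi a - phi b" "phi a - phi b \<subseteq> K" using o XL_openin by metis
    then show "x \<in> \<Union>(f ` A)" unfolding f_def A_def by blast
  qed
  moreover have "\<And>p. p \<in> A \<Longrightarrow> openin (XL TYPE('a)) (f p)"
    unfolding f_def by (auto intro: XL_open_basic)
  ultimately obtain A0 where A0: "A0 \<subseteq> A" "finite A0" "K \<subseteq> \<Union>(f ` A0)"
    using compact_cover[OF cK] by meson
  have Keq: "K = \<Union>(f ` A0)" using A0 unfolding A_def f_def by blast
  have "down (XL TYPE('a)) (\<subseteq>) K = (\<Union>p\<in>A0. down (XL TYPE('a)) (\<subseteq>) (f p))"
    unfolding Keq down_def by blast
  also have "\<dots> = (\<Union>p\<in>A0. XL_points TYPE('a) - phi (himp (fst p) (snd p)))"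
    unfolding f_def using down_basic[OF fr] by (auto split: prod.splits)
  finally have eq: "down (XL TYPE('a)) (\<subseteq>) K = (\<Union>p\<in>A0. XL_points TYPE('a) - phi (himp (fst p) (snd p)))" .
  have "openin (XL TYPE('a)) (\<Union>p\<in>A0. XL_points TYPE('a) - phi (himp (fst p) (snd p)))"
    by (rule openin_Union) (auto intro: XL_open_cphi)
  moreover have "closedin (XL TYPE('a)) (\<Union>p\<in>A0. XL_points TYPE('a) - phi (himp (fst p) (snd p)))"
    by (rule closedin_Union) (auto intro: XL_closed_cphi A0(2))
  ultimately show ?thesis unfolding clopen_def eq by blast
qed

lemma XL_hausdorff: "Hausdorff_space (XL TYPE('a::complete_lattice))"
  unfolding Hausdorff_space_def
proof (intro allI impI)
  fix x y assume h: "x \<in> topspace (XL TYPE('a)) \<and> y \<in> topspace (XL TYPE('a)) \<and> x \<noteq> y"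
  then have px: "prime_filter x" and py: "prime_filter y" and ne: "x \<noteq> y" by (auto simp: XL_points_iff)
  have sep: "\<exists>U V. openin (XL TYPE('a)) U \<and> openin (XL TYPE('a)) V \<and> x \<in> U \<and> y \<in> V \<and> disjnt U V"
    if a: "(a::'a) \<in> x" "a \<notin> y" "prime_filter x" "prime_filter y" for x y a
  proof -
    have "x \<in> phi a" "y \<in> XL_points TYPE('a) - phi a" using a by (auto simp: phi_iff XL_points_iff)
    moreover have "disjnt (phi a) (XL_points TYPE('a) - phi a)" by (simp add: disjnt_def)
    ultimately show ?thesis using XL_open_phi[of a] XL_open_cphi[of a]
      by (intro exI[of _ "phi a"] exI[of _ "XL_points TYPE('a) - phi a"]) simp
  qed
  from ne have "\<exists>a. \<not> (a \<in> x \<longleftrightarrow> a \<in> y)" by (meson subsetI subset_antisym)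
  then obtain a::'a where "(a \<in> x \<and> a \<notin> y) \<or> (a \<in> y \<and> a \<notin> x)" by blast
  then show "\<exists>U V. openin (XL TYPE('a)) U \<and> openin (XL TYPE('a)) V \<and> x \<in> U \<and> y \<in> V \<and> disjnt U V"
  proof
    assume a: "a \<in> x \<and> a \<notin> y"
    show ?thesis using sep[of a x y] a px py by blast
  next
    assume a: "a \<in> y \<and> a \<notin> x"
    then obtain U V where "openin (XL TYPE('a)) U" "openin (XL TYPE('a)) V" "y \<in> U" "x \<in> V" "disjnt U V"
      using sep[of a y x] px py by blast
    then show ?thesis using disjnt_sym by blast
  qed
qed

lemma XL_dim0: "(XL TYPE('a::complete_lattice)) dim_le 0"
proof -
  let ?P = "\<lambda>U. closedin (XL TYPE('a)) U \<and> openin (XL TYPE('a)) U"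
  have ex: "\<forall>W x. openin (XL TYPE('a)) W \<and> x \<in> W \<longrightarrow> (\<exists>U. ?P U \<and> x \<in> U \<and> U \<subseteq> W)"
  proof (intro allI impI)
    fix W x assume h: "openin (XL TYPE('a)) W \<and> x \<in> W"
    then obtain a b :: 'a where ab: "x \<in> phi a - phi b" "phi a - phi b \<subseteq> W" using XL_openin by metis
    have "?P (phi a - phi b)" using XL_open_basic[of a b] XL_closed_basic[of a b] by simp
    then show "\<exists>U. ?P U \<and> x \<in> U \<and> U \<subseteq> W" using ab by (intro exI[of _ "phi a - phi b"]) simp
  qed
  have "\<forall>S. ?P S \<longrightarrow> openin (XL TYPE('a)) S" by simp
  then have iff: "neighbourhood_base_of ?P (XL TYPE('a)) \<longleftrightarrow> (\<forall>W x. openin (XL TYPE('a)) W \<and> x \<in> W \<longrightarrow> (\<exists>U. ?P U \<and> x \<in> U \<and> U \<subseteq> W))"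
    by (rule open_neighbourhood_base_of)
  have "neighbourhood_base_of ?P (XL TYPE('a))" using iff ex by simp
  then show ?thesis unfolding dimension_le_0_neighbourhood_base_of_clopen .
qed

lemma XL_stone: "frame TYPE('a::complete_lattice) \<Longrightarrow> stone_space (XL TYPE('a))"
  unfolding stone_space_def using XL_compact XL_hausdorff XL_dim0 by blast

lemma phi_upset: "upset (XL TYPE('a::complete_lattice)) (\<subseteq>) (phi (a::'a))"
  unfolding upset_def using phi_sub[of a] by (auto simp: phi_iff XL_points_iff)

lemma phi_ClopUp: "phi (a::'a::complete_lattice) \<in> ClopUp (XL TYPE('a)) (\<subseteq>)"
  unfolding ClopUp_def using XL_clopen_phi phi_upset by blast

lemma XL_priestley: "frame TYPE('a::complete_lattice) \<Longrightarrow> priestley_space (XL TYPE('a)) (\<subseteq>)"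
  unfolding priestley_space_def
proof (intro conjI)
  assume fr: "frame TYPE('a)"
  show "stone_space (XL TYPE('a))" using XL_stone[OF fr] .
  show "partial_order_on_space (XL TYPE('a)) (\<subseteq>)" unfolding partial_order_on_space_def by auto
  show "\<forall>x\<in>topspace (XL TYPE('a)). \<forall>y\<in>topspace (XL TYPE('a)). \<not> x \<subseteq> y \<longrightarrow> (\<exists>U\<in>ClopUp (XL TYPE('a)) (\<subseteq>). x \<in> U \<and> y \<notin> U)"
  proof (intro ballI impI)
    fix x y assume "x \<in> topspace (XL TYPE('a))" "y \<in> topspace (XL TYPE('a))" "\<not> x \<subseteq> y"
    then obtain a::'a where "a \<in> x" "a \<notin> y" "prime_filter x" by (auto simp: XL_points_iff)
    then have "x \<in> phi a" "y \<notin> phi a" by (auto simp: phi_iff)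
    then show "\<exists>U\<in>ClopUp (XL TYPE('a)) (\<subseteq>). x \<in> U \<and> y \<notin> U"
      using phi_ClopUp[of a] by blast
  qed
qed

lemma XL_Lspace:
  assumes fr: "frame TYPE('a::complete_lattice)"
  shows "L_space (XL TYPE('a)) (\<subseteq>)"
  unfolding L_space_def
proof (intro conjI allI impI)
  show "priestley_space (XL TYPE('a)) (\<subseteq>)" using XL_priestley[OF fr] .
next
  fix U assume "clopen (XL TYPE('a)) U"
  then show "clopen (XL TYPE('a)) (down (XL TYPE('a)) (\<subseteq>) U)" using down_clopen[OF fr] by blast
next
  fix W assume W: "openin (XL TYPE('a)) W \<and> upset (XL TYPE('a)) (\<subseteq>) W"
  have eq: "W = \<Union>(phi ` {c::'a. phi c \<subseteq> W})" using open_up_Union[OF fr] W by blast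
  have "XL TYPE('a) closure_of W = XL TYPE('a) closure_of (\<Union>(phi ` {c::'a. phi c \<subseteq> W}))"
    using eq by (rule arg_cong)
  also have "\<dots> = phi (Sup {c::'a. phi c \<subseteq> W})" by (rule closure_phi[OF fr])
  finally show "openin (XL TYPE('a)) (XL TYPE('a) closure_of W)" by (simp add: XL_open_phi)
qed

lemma XL_Lcompact:
  assumes fr: "frame TYPE('a::complete_lattice)" and cf: "compact_frame TYPE('a)"
  shows "L_compact (XL TYPE('a)) (\<subseteq>)"
  unfolding L_compact_def
proof
  show "topspace (XL TYPE('a)) \<subseteq> ker (XL TYPE('a)) (\<subseteq>) (topspace (XL TYPE('a)))"
  proof -
    have "way_below_sp (XL TYPE('a)) (\<subseteq>) (phi top) (phi top)"
      unfolding way_below_sp_def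
    proof (intro allI impI)
      fix W assume W: "openin (XL TYPE('a)) W \<and> upset (XL TYPE('a)) (\<subseteq>) W \<and> phi top \<subseteq> XL TYPE('a) closure_of W"
      define A where "A = {c::'a. phi c \<subseteq> W}"
      have eq: "W = \<Union>(phi ` A)" unfolding A_def using open_up_Union[OF fr] W by blast
      have "XL TYPE('a) closure_of W = XL TYPE('a) closure_of (\<Union>(phi ` A))"
        using eq by (rule arg_cong)
      also have "\<dots> = phi (Sup A)" by (rule closure_phi[OF fr])
      finally have "phi top \<subseteq> phi (Sup A)" using W by simp
      then have "top \<le> Sup A" by (rule phi_le[OF fr])
      then obtain T where T: "finite T" "T \<subseteq> A" "top \<le> Sup T"
        using cf unfolding compact_frame_def way_below_def by blast
      have "phi top \<subseteq> phi (Sup T)" using T(3) by (rule phi_mono)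
      also have "\<dots> = \<Union>(phi ` T)" by (rule phi_Sup_fin[OF T(1)])
      also have "\<dots> \<subseteq> W" using T(2) unfolding A_def by blast
      finally show "phi top \<subseteq> W" .
    qed
    then have "phi top \<subseteq> ker (XL TYPE('a)) (\<subseteq>) (phi top)"
      unfolding ker_def using phi_ClopUp[of "top::'a"] by blast
    then show ?thesis by (simp add: phi_top)
  qed
next
  show "ker (XL TYPE('a)) (\<subseteq>) (topspace (XL TYPE('a))) \<subseteq> topspace (XL TYPE('a))"
    unfolding ker_def ClopUp_def upset_def by blast
qed

lemma pc_inf: "frame TYPE('a::complete_lattice) \<Longrightarrow> inf (c::'a) (pseudocompl c) = bot"
  unfolding pseudocompl_def using frame_dist[of c "{x. inf c x = bot}"] by simp

lemma compl_ClopBi: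
  assumes fr: "frame TYPE('a::complete_lattice)" and c: "complemented (c::'a)"
  shows "phi c \<in> ClopBi (XL TYPE('a)) (\<subseteq>)"
proof -
  have "downset (XL TYPE('a)) (\<subseteq>) (phi c)"
    unfolding downset_def
  proof (intro conjI ballI impI)
    show "phi c \<subseteq> topspace (XL TYPE('a))" using phi_sub by simp
  next
    fix x y assume x: "x \<in> phi c" and y: "y \<in> topspace (XL TYPE('a))" and yx: "y \<subseteq> x"
    have py: "prime_filter y" using y by (simp add: XL_points_iff)
    have "sup c (pseudocompl c) \<in> y" using c pf_top[OF py] by (simp add: complemented_def)
    then have "c \<in> y \<or> pseudocompl c \<in> y" using pf_sup[OF py] by blast
    moreover have "pseudocompl c \<notin> y"
    proof
      assume "pseudocompl c \<in> y"
      then have "inf c (pseudocompl c) \<in> x" using x yx by (auto simp: phi_iff pf_inf)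
      then show False using pc_inf[OF fr] x by (auto simp: phi_iff pf_bot)
    qed
    ultimately show "y \<in> phi c" using py by (simp add: phi_iff)
  qed
  then show ?thesis unfolding ClopBi_def using XL_clopen_phi phi_upset by blast
qed

lemma XL_cen_dense:
  assumes fr: "frame TYPE('a::complete_lattice)" and zd: "zero_dim_frame TYPE('a)"
    and U: "U \<in> ClopUp (XL TYPE('a)) (\<subseteq>)"
  shows "cen (XL TYPE('a)) (\<subseteq>) U \<subseteq> U \<and> U \<subseteq> XL TYPE('a) closure_of (cen (XL TYPE('a)) (\<subseteq>) U)"
proof
  show "cen (XL TYPE('a)) (\<subseteq>) U \<subseteq> U" unfolding cen_def by blast
next
  obtain a::'a where a: "U = phi a" using clopen_up_phi[OF fr] U unfolding ClopUp_def by blast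
  define C where "C = {c::'a. complemented c \<and> c \<le> a}"
  have aC: "a = Sup C" using zd unfolding zero_dim_frame_def C_def by blast
  have sub: "\<Union>(phi ` C) \<subseteq> cen (XL TYPE('a)) (\<subseteq>) U"
  proof
    fix x assume "x \<in> \<Union>(phi ` C)"
    then obtain c where c: "c \<in> C" "x \<in> phi c" by blast
    have "phi c \<in> ClopBi (XL TYPE('a)) (\<subseteq>)" using c(1) compl_ClopBi[OF fr] unfolding C_def by blast
    moreover have "phi c \<subseteq> U" using c(1) phi_mono unfolding a C_def by blast
    ultimately show "x \<in> cen (XL TYPE('a)) (\<subseteq>) U" unfolding cen_def using c(2) by blast
  qed
  have "U = phi (Sup C)" using a aC by simp
  also have "\<dots> = XL TYPE('a) closure_of (\<Union>(phi ` C))" by (rule closure_phi[OF fr, symmetric])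
  also have "\<dots> \<subseteq> XL TYPE('a) closure_of (cen (XL TYPE('a)) (\<subseteq>) U)" using sub by (rule closure_of_mono)
  finally show "U \<subseteq> XL TYPE('a) closure_of (cen (XL TYPE('a)) (\<subseteq>) U)" .
qed

theorem part1_fwd:
  assumes fr: "frame TYPE('a::complete_lattice)" and sf: "stone_frame TYPE('a)"
  shows "stone_L_space (XL TYPE('a)) (\<subseteq>)"
proof -
  have cf: "compact_frame TYPE('a)" and zd: "zero_dim_frame TYPE('a)" using sf by (auto simp: stone_frame_def)
  show ?thesis unfolding stone_L_space_def
    using XL_Lspace[OF fr] XL_Lcompact[OF fr cf] XL_cen_dense[OF fr zd] by blast
qed

theorem part1_bwd:
  assumes fr: "frame TYPE('a::complete_lattice)" and sl: "stone_L_space (XL TYPE('a)) (\<subseteq>)"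
  shows "stone_frame TYPE('a)"
proof -
  have Ls: "L_space (XL TYPE('a)) (\<subseteq>)" and Lc: "L_compact (XL TYPE('a)) (\<subseteq>)"
    and cd: "\<forall>U\<in>ClopUp (XL TYPE('a)) (\<subseteq>). cen (XL TYPE('a)) (\<subseteq>) U \<subseteq> U \<and> U \<subseteq> XL TYPE('a) closure_of (cen (XL TYPE('a)) (\<subseteq>) U)"
    using sl unfolding stone_L_space_def by auto
  have cf: "compact_frame TYPE('a)"
    unfolding compact_frame_def way_below_def
  proof (intro allI impI)
    fix S :: "'a set" assume top: "top \<le> Sup S"
    define W where "W = \<Union>(phi ` S)"
    have Wo: "openin (XL TYPE('a)) W" unfolding W_def by (rule openin_Union) (auto intro: XL_open_phi)
    have Wu: "upset (XL TYPE('a)) (\<subseteq>) W" unfolding W_def upset_def using phi_upset[where 'a='a]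
      unfolding upset_def by blast
    have "XL TYPE('a) closure_of W = phi (Sup S)" unfolding W_def by (rule closure_phi[OF fr])
    moreover have "phi (Sup S) = XL_points TYPE('a)" using phi_mono[OF top] phi_sub[of "Sup S"] phi_top[where 'a='a] by blast
    ultimately have clW: "topspace (XL TYPE('a)) \<subseteq> XL TYPE('a) closure_of W" by simp
    have PW: "topspace (XL TYPE('a)) \<subseteq> W"
    proof
      fix p assume p: "p \<in> topspace (XL TYPE('a))"
      then have "p \<in> ker (XL TYPE('a)) (\<subseteq>) (topspace (XL TYPE('a)))" using Lc unfolding L_compact_def by blast
      then obtain V where V: "V \<in> ClopUp (XL TYPE('a)) (\<subseteq>)" "way_below_sp (XL TYPE('a)) (\<subseteq>) V (topspace (XL TYPE('a)))" "p \<in> V"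
        unfolding ker_def by blast
      have "V \<subseteq> W" using V(2) Wo Wu clW unfolding way_below_sp_def by blast
      then show "p \<in> W" using V(3) by blast
    qed
    have cP: "compactin (XL TYPE('a)) (topspace (XL TYPE('a)))" using XL_compact[OF fr] by (simp add: compact_space_def)
    obtain T where T: "T \<subseteq> S" "finite T" "topspace (XL TYPE('a)) \<subseteq> \<Union>(phi ` T)"
      using compact_cover[OF cP, of phi S] PW XL_open_phi unfolding W_def by blast
    have "top \<le> Sup T"
    proof (rule phi_le[OF fr])
      show "phi top \<subseteq> phi (Sup T)" using T(3) phi_Sup_fin[OF T(2)] by (simp add: phi_top)
    qed
    then show "\<exists>T. finite T \<and> T \<subseteq> S \<and> top \<le> Sup T" using T by blast
  qed
  have zd: "zero_dim_frame TYPE('a)"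
    unfolding zero_dim_frame_def
  proof
    fix a :: 'a
    define C where "C = {c::'a. complemented c \<and> c \<le> a}"
    have ba: "Sup C \<le> a" unfolding C_def by (rule Sup_least) blast
    have cenb: "cen (XL TYPE('a)) (\<subseteq>) (phi a) \<subseteq> phi (Sup C)"
    proof
      fix x assume "x \<in> cen (XL TYPE('a)) (\<subseteq>) (phi a)"
      then obtain V where V: "V \<in> ClopBi (XL TYPE('a)) (\<subseteq>)" "V \<subseteq> phi a" "x \<in> V" unfolding cen_def by blast
      have Vc: "clopen (XL TYPE('a)) V" and Vu: "upset (XL TYPE('a)) (\<subseteq>) V" and Vd: "downset (XL TYPE('a)) (\<subseteq>) V"
        using V(1) unfolding ClopBi_def by auto
      obtain c::'a where c: "V = phi c" using clopen_up_phi[OF fr Vc Vu] by blast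
      have VP: "V \<subseteq> XL_points TYPE('a)" using Vu unfolding upset_def by simp
      have "clopen (XL TYPE('a)) (XL_points TYPE('a) - V)"
      proof -
        have "openin (XL TYPE('a)) (XL_points TYPE('a) - V)" using Vc unfolding clopen_def closedin_def by simp
        moreover have "XL_points TYPE('a) - (XL_points TYPE('a) - V) = V" using VP by blast
        then have "closedin (XL TYPE('a)) (XL_points TYPE('a) - V)" using Vc unfolding clopen_def closedin_def by simp
        ultimately show ?thesis unfolding clopen_def by blast
      qed
      moreover have "upset (XL TYPE('a)) (\<subseteq>) (XL_points TYPE('a) - V)"
        using Vd unfolding upset_def downset_def by auto
      ultimately obtain d::'a where d: "XL_points TYPE('a) - V = phi d" using clopen_up_phi[OF fr] by blast
      have "phi (inf c d) \<subseteq> phi bot" unfolding phi_inf using c d by blast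
      then have "inf c d \<le> bot" by (rule phi_le[OF fr])
      then have "inf c d = bot" by (simp add: bot_unique)
      then have dpc: "d \<le> pseudocompl c" unfolding pseudocompl_def by (simp add: Sup_upper)
      have "phi top \<subseteq> phi (sup c d)" unfolding phi_sup phi_top using c d by blast
      then have "top \<le> sup c d" by (rule phi_le[OF fr])
      also have "\<dots> \<le> sup c (pseudocompl c)" using dpc by (simp add: sup.coboundedI2)
      finally have "complemented c" unfolding complemented_def by (simp add: top_unique)
      moreover have "c \<le> a" using V(2) c phi_le[OF fr] by blast
      ultimately have "c \<in> C" unfolding C_def by blast
      then have "phi c \<subseteq> phi (Sup C)" by (simp add: phi_mono Sup_upper)
      then show "x \<in> phi (Sup C)" using V(3) c by blast
    qed
    have "phi a \<subseteq> XL TYPE('a) closure_of (cen (XL TYPE('a)) (\<subseteq>) (phi a))" using cd phi_ClopUp by blast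
    also have "\<dots> \<subseteq> phi (Sup C)" using cenb XL_closed_phi by (rule closure_of_minimal)
    finally have "a \<le> Sup C" by (rule phi_le[OF fr])
    then show "a = Sup {c. complemented c \<and> c \<le> a}" using ba unfolding C_def by (simp add: antisym)
  qed
  show ?thesis unfolding stone_frame_def using cf zd by blast
qed

abbreviation YL :: "'a::complete_lattice itself \<Rightarrow> 'a set set" where
  "YL A \<equiv> spatial_points (XL A) (\<subseteq>)"

lemma cp_prime: assumes "completely_prime_filter y" shows "prime_filter y"
proof -
  have f: "is_filter y" "bot \<notin> y" and c: "\<forall>S. Sup S \<in> y \<longrightarrow> (\<exists>s\<in>S. s \<in> y)"
    using assms unfolding completely_prime_filter_def by auto
  have "\<forall>a b. sup a b \<in> y \<longrightarrow> a \<in> y \<or> b \<in> y"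
  proof (intro allI impI)
    fix a b assume "sup a b \<in> y"
    then have "Sup {a,b} \<in> y" by simp
    then obtain s where "s \<in> {a,b}" "s \<in> y" using c by blast
    then show "a \<in> y \<or> b \<in> y" by blast
  qed
  then show ?thesis unfolding prime_filter_def using f by blast
qed

lemma cp_Sup: "completely_prime_filter y \<Longrightarrow> Sup A \<in> y \<longleftrightarrow> (\<exists>a\<in>A. a \<in> y)"
  using cp_prime pf_Sup2 unfolding completely_prime_filter_def by metis

lemma YL_sub: "YL TYPE('a::complete_lattice) \<subseteq> XL_points TYPE('a)"
  unfolding spatial_points_def by simp

lemma YL_cp:
  assumes fr: "frame TYPE('a::complete_lattice)"
  shows "y \<in> YL TYPE('a) \<longleftrightarrow> completely_prime_filter (y::'a set)"
proof
  assume cp: "completely_prime_filter y"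
  have py: "prime_filter y" using cp_prime[OF cp] .
  define m where "m = Sup {x::'a. x \<notin> y}"
  have my: "m \<notin> y"
  proof
    assume "m \<in> y"
    then obtain x where "x \<in> {x::'a. x \<notin> y}" "x \<in> y" using cp unfolding m_def completely_prime_filter_def by blast
    then show False by blast
  qed
  have "down (XL TYPE('a)) (\<subseteq>) {y} = XL_points TYPE('a) - phi m"
  proof
    show "down (XL TYPE('a)) (\<subseteq>) {y} \<subseteq> XL_points TYPE('a) - phi m"
    proof
      fix z assume "z \<in> down (XL TYPE('a)) (\<subseteq>) {y}"
      then have z: "z \<in> XL_points TYPE('a)" "z \<subseteq> y" unfolding down_def by auto
      have "m \<notin> z" using z(2) my by blast
      then show "z \<in> XL_points TYPE('a) - phi m" using z(1) by (simp add: phi_iff)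
    qed
  next
    show "XL_points TYPE('a) - phi m \<subseteq> down (XL TYPE('a)) (\<subseteq>) {y}"
    proof
      fix z assume z: "z \<in> XL_points TYPE('a) - phi m"
      then have pz: "prime_filter z" and mz: "m \<notin> z" by (auto simp: XL_points_iff phi_iff)
      have "z \<subseteq> y"
      proof
        fix w assume w: "w \<in> z"
        show "w \<in> y"
        proof (rule ccontr)
          assume "w \<notin> y"
          then have "w \<in> {x::'a. x \<notin> y}" by simp
          then have "w \<le> m" unfolding m_def by (rule Sup_upper)
          then show False using w mz pz pf_up by blast
        qed
      qed
      then show "z \<in> down (XL TYPE('a)) (\<subseteq>) {y}" unfolding down_def using z by simp
    qed
  qed
  then have "clopen (XL TYPE('a)) (down (XL TYPE('a)) (\<subseteq>) {y})"
    unfolding clopen_def using XL_open_cphi[of m] XL_closed_cphi[of m] by simp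
  moreover have "y \<in> topspace (XL TYPE('a))" using py by (simp add: XL_points_iff)
  ultimately show "y \<in> YL TYPE('a)" unfolding spatial_points_def by blast
next
  assume y: "y \<in> YL TYPE('a)"
  define D where "D = down (XL TYPE('a)) (\<subseteq>) {y}"
  have yP: "y \<in> XL_points TYPE('a)" and Dc: "clopen (XL TYPE('a)) D"
    using y unfolding spatial_points_def D_def by auto
  have py: "prime_filter y" using yP by (simp add: XL_points_iff)
  have Deq: "z \<in> D \<longleftrightarrow> prime_filter z \<and> z \<subseteq> y" for z
    unfolding D_def down_def by (simp add: XL_points_iff)
  have DP: "D \<subseteq> XL_points TYPE('a)" using Deq by (auto simp: XL_points_iff)
  have "clopen (XL TYPE('a)) (XL_points TYPE('a) - D)"
  proof -
    have "openin (XL TYPE('a)) (XL_points TYPE('a) - D)" using Dc unfolding clopen_def closedin_def by simp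
    moreover have "XL_points TYPE('a) - (XL_points TYPE('a) - D) = D" using DP by blast
    then have "closedin (XL TYPE('a)) (XL_points TYPE('a) - D)" using Dc unfolding clopen_def closedin_def by simp
    ultimately show ?thesis unfolding clopen_def by blast
  qed
  moreover have "upset (XL TYPE('a)) (\<subseteq>) (XL_points TYPE('a) - D)"
    unfolding upset_def
  proof (intro conjI ballI impI)
    show "XL_points TYPE('a) - D \<subseteq> topspace (XL TYPE('a))" by simp
  next
    fix u v assume u: "u \<in> XL_points TYPE('a) - D" and v: "v \<in> topspace (XL TYPE('a))" and uv: "u \<subseteq> v"
    have "v \<notin> D"
    proof
      assume "v \<in> D"
      then have "v \<subseteq> y" using Deq by blast
      then have "u \<in> D" using Deq uv u by (auto simp: XL_points_iff)
      then show False using u by blast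
    qed
    then show "v \<in> XL_points TYPE('a) - D" using v by simp
  qed
  ultimately obtain m::'a where m: "XL_points TYPE('a) - D = phi m" using clopen_up_phi[OF fr] by blast
  have yD: "y \<in> D" using Deq py by blast
  have my: "m \<notin> y"
  proof
    assume "m \<in> y"
    then have "y \<in> phi m" using py by (simp add: phi_iff)
    then show False using m yD by blast
  qed
  have sm: "s \<le> m" if s: "s \<notin> y" for s
  proof (rule pf_le[OF fr])
    fix p assume p: "prime_filter p" "s \<in> p"
    show "m \<in> p"
    proof (rule ccontr)
      assume "m \<notin> p"
      then have "p \<notin> phi m" by (simp add: phi_iff)
      then have "p \<in> D" using m p(1) by (auto simp: XL_points_iff)
      then have "p \<subseteq> y" using Deq by blast
      then show False using p s by blast
    qed
  qed
  show "completely_prime_filter y" unfolding completely_prime_filter_def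
  proof (intro conjI allI impI)
    show "is_filter y" using py by (rule pf_filter)
    show "bot \<notin> y" using py by (rule pf_bot)
  next
    fix S assume S: "Sup S \<in> y"
    show "\<exists>s\<in>S. s \<in> y"
    proof (rule ccontr)
      assume ns: "\<not> (\<exists>s\<in>S. s \<in> y)"
      have "Sup S \<le> m"
      proof (rule Sup_least)
        fix s assume "s \<in> S" then show "s \<le> m" using ns sm by blast
      qed
      then show False using S my py pf_up by blast
    qed
  qed
qed

lemma phiY: "z \<in> YL TYPE('a::complete_lattice) \<Longrightarrow> z \<in> phi (c::'a) \<longleftrightarrow> c \<in> z"
  using YL_sub by (auto simp: phi_iff XL_points_iff)

lemma ClopUp_eq: "frame TYPE('a::complete_lattice) \<Longrightarrow> ClopUp (XL TYPE('a)) (\<subseteq>) = range (phi::'a \<Rightarrow> _)"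
  using clopen_up_phi phi_ClopUp unfolding ClopUp_def by blast

lemma SP_topspace: "topspace (spatial_part (XL TYPE('a::complete_lattice)) (\<subseteq>)) = YL TYPE('a)"
proof -
  have "phi (top::'a) \<inter> YL TYPE('a) = YL TYPE('a)" using YL_sub phi_top by blast
  then have "YL TYPE('a) \<in> (\<lambda>U. U \<inter> YL TYPE('a)) ` ClopUp (XL TYPE('a)) (\<subseteq>)"
    using phi_ClopUp[of "top::'a"] by (metis image_eqI)
  then show ?thesis unfolding spatial_part_def topology_generated_by_topspace by blast
qed

lemma SP_open:
  assumes fr: "frame TYPE('a::complete_lattice)"
  shows "openin (spatial_part (XL TYPE('a)) (\<subseteq>)) V \<longleftrightarrow> (\<exists>a::'a. V = phi a \<inter> YL TYPE('a))"
proof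
  assume "openin (spatial_part (XL TYPE('a)) (\<subseteq>)) V"
  then have "generate_topology_on ((\<lambda>U. U \<inter> YL TYPE('a)) ` ClopUp (XL TYPE('a)) (\<subseteq>)) V"
    unfolding spatial_part_def by (rule openin_topology_generated_by)
  then show "\<exists>a::'a. V = phi a \<inter> YL TYPE('a)"
  proof induction
    case Empty
    show ?case by (rule exI[of _ "bot::'a"]) (simp add: phi_bot)
  next
    case (Int u v)
    then obtain a b :: 'a where "u = phi a \<inter> YL TYPE('a)" "v = phi b \<inter> YL TYPE('a)" by blast
    then show ?case by (intro exI[of _ "inf a b"]) (auto simp: phi_inf)
  next
    case (UN K)
    define A where "A = {a::'a. phi a \<inter> YL TYPE('a) \<in> K}"
    have "\<Union>K = phi (Sup A) \<inter> YL TYPE('a)"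
    proof
      show "\<Union>K \<subseteq> phi (Sup A) \<inter> YL TYPE('a)"
      proof
        fix z assume "z \<in> \<Union>K"
        then obtain k where k: "k \<in> K" "z \<in> k" by blast
        then obtain a::'a where a: "k = phi a \<inter> YL TYPE('a)" using UN.IH by blast
        then have "a \<in> A" using k unfolding A_def by simp
        then have "phi a \<subseteq> phi (Sup A)" by (simp add: phi_mono Sup_upper)
        then show "z \<in> phi (Sup A) \<inter> YL TYPE('a)" using k a by blast
      qed
    next
      show "phi (Sup A) \<inter> YL TYPE('a) \<subseteq> \<Union>K"
      proof
        fix z assume z: "z \<in> phi (Sup A) \<inter> YL TYPE('a)"
        then have cpz: "completely_prime_filter z" using YL_cp[OF fr] by blast
        have "Sup A \<in> z" using z phiY by blast
        then obtain a where a: "a \<in> A" "a \<in> z" using cp_Sup[OF cpz] by blast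
        then have "z \<in> phi a \<inter> YL TYPE('a)" using z phiY by blast
        then show "z \<in> \<Union>K" using a(1) unfolding A_def by blast
      qed
    qed
    then show ?case by blast
  next
    case (Basis s)
    then obtain U where U: "U \<in> ClopUp (XL TYPE('a)) (\<subseteq>)" "s = U \<inter> YL TYPE('a)" by blast
    then obtain c::'a where "U = phi c" using ClopUp_eq[OF fr] by blast
    then show ?case using U by blast
  qed
next
  assume "\<exists>a::'a. V = phi a \<inter> YL TYPE('a)"
  then obtain a::'a where a: "V = phi a \<inter> YL TYPE('a)" by blast
  show "openin (spatial_part (XL TYPE('a)) (\<subseteq>)) V"
    unfolding spatial_part_def a
    by (rule topology_generated_by_Basis) (use phi_ClopUp[of a] in blast)
qed

lemma spatial_le:
  assumes fr: "frame TYPE('a::complete_lattice)" and sp: "spatial_frame TYPE('a)"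
    and h: "\<And>y. y \<in> YL TYPE('a) \<Longrightarrow> (a::'a) \<in> y \<Longrightarrow> b \<in> y"
  shows "a \<le> b"
proof (rule ccontr)
  assume nab: "\<not> a \<le> b"
  then have "a \<noteq> inf a b" by (metis inf.orderI)
  then obtain F where F: "completely_prime_filter F" "a \<in> F \<longleftrightarrow> inf a b \<notin> F"
    using sp unfolding spatial_frame_def by blast
  have pF: "prime_filter F" using cp_prime[OF F(1)] .
  have FY: "F \<in> YL TYPE('a)" using YL_cp[OF fr] F(1) by blast
  show False
  proof (cases "a \<in> F")
    case True
    then have "b \<in> F" using h FY by blast
    then have "inf a b \<in> F" using True pf_inf[OF pF] by blast
    then show False using F(2) True by blast
  next
    case False
    then have "inf a b \<in> F" using F(2) by blast
    then show False using False pf_inf[OF pF] by blast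
  qed
qed

lemma SP_phi_open: "frame TYPE('a::complete_lattice) \<Longrightarrow> openin (spatial_part (XL TYPE('a)) (\<subseteq>)) (phi (a::'a) \<inter> YL TYPE('a))"
  using SP_open by blast

lemma compl_split:
  assumes fr: "frame TYPE('a::complete_lattice)" and c: "complemented (c::'a)" and z: "prime_filter z"
  shows "c \<notin> z \<longleftrightarrow> pseudocompl c \<in> z"
proof
  assume "c \<notin> z"
  moreover have "sup c (pseudocompl c) \<in> z" using c pf_top[OF z] by (simp add: complemented_def)
  ultimately show "pseudocompl c \<in> z" using pf_sup[OF z] by blast
next
  assume pc: "pseudocompl c \<in> z"
  show "c \<notin> z"
  proof
    assume "c \<in> z"
    then have "inf c (pseudocompl c) \<in> z" using pc pf_inf[OF z] by blast
    then show False using pc_inf[OF fr] pf_bot[OF z] by simp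
  qed
qed

lemma YL_prime: "frame TYPE('a::complete_lattice) \<Longrightarrow> y \<in> YL TYPE('a) \<Longrightarrow> prime_filter (y::'a set)"
  using YL_sub by (auto simp: XL_points_iff)

lemma zd_pick:
  assumes fr: "frame TYPE('a::complete_lattice)" and zd: "zero_dim_frame TYPE('a)"
    and y: "y \<in> YL TYPE('a)" and a: "(a::'a) \<in> y"
  shows "\<exists>c. complemented c \<and> c \<le> a \<and> c \<in> y"
proof -
  define C where "C = {c. complemented c \<and> c \<le> a}"
  have eq: "a = Sup C" using zd unfolding zero_dim_frame_def C_def by blast
  have "Sup C \<in> y" using a eq by simp
  moreover have "completely_prime_filter y" using YL_cp[OF fr] y by blast
  ultimately have "\<exists>c\<in>C. c \<in> y" using cp_Sup by blast
  then show ?thesis unfolding C_def by blast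
qed

theorem part2_fwd:
  assumes fr: "frame TYPE('a::complete_lattice)" and sp: "spatial_frame TYPE('a)" and sf: "stone_frame TYPE('a)"
  shows "stone_space (spatial_part (XL TYPE('a)) (\<subseteq>))"
proof -
  have cf: "compact_frame TYPE('a)" and zd: "zero_dim_frame TYPE('a)" using sf by (auto simp: stone_frame_def)
  let ?S = "spatial_part (XL TYPE('a)) (\<subseteq>)"
  let ?Y = "YL TYPE('a)"
  have comp: "compact_space ?S"
    unfolding compact_space_alt SP_topspace
  proof (intro allI impI)
    fix \<U> assume h: "(\<forall>U\<in>\<U>. openin ?S U) \<and> ?Y \<subseteq> \<Union>\<U>"
    define A where "A = {a::'a. phi a \<inter> ?Y \<in> \<U>}"
    have "top \<le> Sup A"
    proof (rule spatial_le[OF fr sp])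
      fix y assume y: "y \<in> ?Y"
      then obtain U where U: "U \<in> \<U>" "y \<in> U" using h by blast
      then obtain a::'a where a: "U = phi a \<inter> ?Y" using h SP_open[OF fr] by blast
      then have "a \<in> A" "a \<in> y" using U y phiY unfolding A_def by auto
      then show "Sup A \<in> y" using cp_Sup YL_cp[OF fr] y by blast
    qed
    then obtain T where T: "finite T" "T \<subseteq> A" "top \<le> Sup T"
      using cf unfolding compact_frame_def way_below_def by blast
    show "\<exists>\<F>. finite \<F> \<and> \<F> \<subseteq> \<U> \<and> ?Y \<subseteq> \<Union>\<F>"
    proof (intro exI conjI)
      show "finite ((\<lambda>a. phi a \<inter> ?Y) ` T)" using T(1) by simp
      show "(\<lambda>a. phi a \<inter> ?Y) ` T \<subseteq> \<U>" using T(2) unfolding A_def by blast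
      show "?Y \<subseteq> \<Union>((\<lambda>a. phi a \<inter> ?Y) ` T)"
      proof
        fix y assume y: "y \<in> ?Y"
        have py: "prime_filter y" using YL_prime[OF fr y] .
        have "Sup T \<in> y" using pf_up[OF py pf_top[OF py] T(3)] .
        then obtain a where "a \<in> T" "a \<in> y" using cp_Sup YL_cp[OF fr] y by blast
        then show "y \<in> \<Union>((\<lambda>a. phi a \<inter> ?Y) ` T)" using y phiY by blast
      qed
    qed
  qed
  have sepc: "\<exists>c. complemented c \<and> c \<in> x \<and> c \<notin> y" if hh: "x \<in> ?Y" "y \<in> ?Y" "(a::'a) \<in> x" "a \<notin> y" for x y a
  proof -
    obtain c where c: "complemented c" "c \<le> a" "c \<in> x" using zd_pick[OF fr zd hh(1,3)] by blast
    have "c \<notin> y" using c(2) hh(4) pf_up YL_prime[OF fr hh(2)] by blast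
    then show ?thesis using c by blast
  qed
  have sepU: "\<exists>U V. openin ?S U \<and> openin ?S V \<and> x \<in> U \<and> y \<in> V \<and> disjnt U V"
    if hh: "x \<in> ?Y" "y \<in> ?Y" "(a::'a) \<in> x" "a \<notin> y" for x y a
  proof -
    obtain c where c: "complemented c" "c \<in> x" "c \<notin> y" using sepc[OF hh] by blast
    have "pseudocompl c \<in> y" using compl_split[OF fr c(1) YL_prime[OF fr hh(2)]] c(3) by blast
    then have xy: "x \<in> phi c \<inter> ?Y" "y \<in> phi (pseudocompl c) \<inter> ?Y" using c(2) hh(1,2) phiY by auto
    have "disjnt (phi c \<inter> ?Y) (phi (pseudocompl c) \<inter> ?Y)"
      unfolding disjnt_def
    proof (rule ccontr)
      assume "phi c \<inter> ?Y \<inter> (phi (pseudocompl c) \<inter> ?Y) \<noteq> {}"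
      then obtain z where z: "z \<in> ?Y" "c \<in> z" "pseudocompl c \<in> z" using phiY by blast
      then show False using compl_split[OF fr c(1) YL_prime[OF fr z(1)]] by blast
    qed
    then show ?thesis using xy SP_phi_open[OF fr, of c] SP_phi_open[OF fr, of "pseudocompl c"]
      by (intro exI[of _ "phi c \<inter> ?Y"] exI[of _ "phi (pseudocompl c) \<inter> ?Y"]) simp
  qed
  have haus: "Hausdorff_space ?S"
    unfolding Hausdorff_space_def SP_topspace
  proof (intro allI impI)
    fix x y assume h: "x \<in> ?Y \<and> y \<in> ?Y \<and> x \<noteq> y"
    then have "\<exists>a. \<not> (a \<in> x \<longleftrightarrow> a \<in> y)" by (meson subsetI subset_antisym)
    then obtain a::'a where "(a \<in> x \<and> a \<notin> y) \<or> (a \<in> y \<and> a \<notin> x)" by blast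
    then show "\<exists>U V. openin ?S U \<and> openin ?S V \<and> x \<in> U \<and> y \<in> V \<and> disjnt U V"
    proof
      assume a: "a \<in> x \<and> a \<notin> y"
      show ?thesis using sepU[of x y a] a h by blast
    next
      assume a: "a \<in> y \<and> a \<notin> x"
      then obtain U V where "openin ?S U" "openin ?S V" "y \<in> U" "x \<in> V" "disjnt U V"
        using sepU[of y x a] h by blast
      then show ?thesis using disjnt_sym by blast
    qed
  qed
  have dim: "?S dim_le 0"
  proof -
    let ?P = "\<lambda>U. closedin ?S U \<and> openin ?S U"
    have ex: "\<forall>W x. openin ?S W \<and> x \<in> W \<longrightarrow> (\<exists>U. ?P U \<and> x \<in> U \<and> U \<subseteq> W)"
    proof (intro allI impI)
      fix W x assume h: "openin ?S W \<and> x \<in> W"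
      then obtain a::'a where a: "W = phi a \<inter> ?Y" using SP_open[OF fr] by blast
      then have xY: "x \<in> ?Y" and ax: "a \<in> x" using h phiY by auto
      obtain c where c: "complemented c" "c \<le> a" "c \<in> x" using zd_pick[OF fr zd xY ax] by blast
      have Uo: "openin ?S (phi c \<inter> ?Y)" by (rule SP_phi_open[OF fr])
      have "?Y - phi c \<inter> ?Y = phi (pseudocompl c) \<inter> ?Y"
      proof
        show "?Y - phi c \<inter> ?Y \<subseteq> phi (pseudocompl c) \<inter> ?Y"
        proof
          fix z assume z: "z \<in> ?Y - phi c \<inter> ?Y"
          then have "c \<notin> z" using phiY by blast
          then have "pseudocompl c \<in> z" using compl_split[OF fr c(1) YL_prime[OF fr]] z by blast
          then show "z \<in> phi (pseudocompl c) \<inter> ?Y" using z phiY by blast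
        qed
      next
        show "phi (pseudocompl c) \<inter> ?Y \<subseteq> ?Y - phi c \<inter> ?Y"
        proof
          fix z assume z: "z \<in> phi (pseudocompl c) \<inter> ?Y"
          then have "pseudocompl c \<in> z" using phiY by blast
          then have "c \<notin> z" using compl_split[OF fr c(1) YL_prime[OF fr]] z by blast
          then show "z \<in> ?Y - phi c \<inter> ?Y" using z phiY by blast
        qed
      qed
      then have "openin ?S (topspace ?S - phi c \<inter> ?Y)" using SP_phi_open[OF fr, of "pseudocompl c"]
        by (simp add: SP_topspace)
      then have Uc: "closedin ?S (phi c \<inter> ?Y)" unfolding closedin_def SP_topspace by simp
      have "phi c \<inter> ?Y \<subseteq> W" using a phi_mono[OF c(2)] by blast
      moreover have "x \<in> phi c \<inter> ?Y" using xY c(3) phiY by blast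
      ultimately show "\<exists>U. ?P U \<and> x \<in> U \<and> U \<subseteq> W" using Uo Uc by blast
    qed
    have "\<forall>S. ?P S \<longrightarrow> openin ?S S" by simp
    then have iff: "neighbourhood_base_of ?P ?S \<longleftrightarrow> (\<forall>W x. openin ?S W \<and> x \<in> W \<longrightarrow> (\<exists>U. ?P U \<and> x \<in> U \<and> U \<subseteq> W))"
      by (rule open_neighbourhood_base_of)
    have "neighbourhood_base_of ?P ?S" using iff ex by simp
    then show ?thesis unfolding dimension_le_0_neighbourhood_base_of_clopen .
  qed
  show ?thesis unfolding stone_space_def using comp haus dim by blast
qed

theorem part2_bwd:
  assumes fr: "frame TYPE('a::complete_lattice)" and sp: "spatial_frame TYPE('a)"
    and ss: "stone_space (spatial_part (XL TYPE('a)) (\<subseteq>))"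
  shows "stone_frame TYPE('a)"
proof -
  let ?S = "spatial_part (XL TYPE('a)) (\<subseteq>)"
  let ?Y = "YL TYPE('a)"
  have comp: "compact_space ?S" and dim: "?S dim_le 0" using ss unfolding stone_space_def by auto
  have cf: "compact_frame TYPE('a)"
    unfolding compact_frame_def way_below_def
  proof (intro allI impI)
    fix S :: "'a set" assume top: "top \<le> Sup S"
    have cY: "compactin ?S ?Y" using comp unfolding compact_space_def SP_topspace .
    have "?Y \<subseteq> \<Union>((\<lambda>s. phi s \<inter> ?Y) ` S)"
    proof
      fix y assume y: "y \<in> ?Y"
      have py: "prime_filter y" using YL_prime[OF fr y] .
      have "Sup S \<in> y" using pf_up[OF py pf_top[OF py] top] .
      then obtain s where "s \<in> S" "s \<in> y" using cp_Sup YL_cp[OF fr] y by blast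
      then show "y \<in> \<Union>((\<lambda>s. phi s \<inter> ?Y) ` S)" using y phiY by blast
    qed
    then obtain T where T: "T \<subseteq> S" "finite T" "?Y \<subseteq> \<Union>((\<lambda>s. phi s \<inter> ?Y) ` T)"
      using compact_cover[OF cY, of "\<lambda>s. phi s \<inter> ?Y" S] SP_phi_open[OF fr] by blast
    have "top \<le> Sup T"
    proof (rule spatial_le[OF fr sp])
      fix y assume y: "y \<in> ?Y"
      then obtain s where "s \<in> T" "y \<in> phi s" using T(3) by blast
      then have "s \<in> T" "s \<in> y" using y phiY by auto
      then show "Sup T \<in> y" using pf_Sup2 YL_prime[OF fr y] by blast
    qed
    then show "\<exists>T. finite T \<and> T \<subseteq> S \<and> top \<le> Sup T" using T by blast
  qed
  have zd: "zero_dim_frame TYPE('a)"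
    unfolding zero_dim_frame_def
  proof
    fix a :: 'a
    define C where "C = {c::'a. complemented c \<and> c \<le> a}"
    have ba: "Sup C \<le> a" unfolding C_def by (rule Sup_least) blast
    have "a \<le> Sup C"
    proof (rule spatial_le[OF fr sp])
      fix y assume y: "y \<in> ?Y" and ay: "a \<in> y"
      let ?P = "\<lambda>U. closedin ?S U \<and> openin ?S U"
      have nb: "neighbourhood_base_of ?P ?S" using dim unfolding dimension_le_0_neighbourhood_base_of_clopen .
      have "\<forall>S. ?P S \<longrightarrow> openin ?S S" by simp
      then have iff: "neighbourhood_base_of ?P ?S \<longleftrightarrow> (\<forall>W x. openin ?S W \<and> x \<in> W \<longrightarrow> (\<exists>U. ?P U \<and> x \<in> U \<and> U \<subseteq> W))"
        by (rule open_neighbourhood_base_of)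
      have "openin ?S (phi a \<inter> ?Y)" by (rule SP_phi_open[OF fr])
      moreover have "y \<in> phi a \<inter> ?Y" using y ay phiY by blast
      ultimately obtain U where U: "closedin ?S U" "openin ?S U" "y \<in> U" "U \<subseteq> phi a \<inter> ?Y"
        using nb iff by blast
      obtain c::'a where c: "U = phi c \<inter> ?Y" using U(2) SP_open[OF fr] by blast
      have "openin ?S (topspace ?S - U)" using U(1) unfolding closedin_def by blast
      then obtain d::'a where d: "?Y - U = phi d \<inter> ?Y" using SP_open[OF fr] SP_topspace by metis
      have "inf c d \<le> bot"
      proof (rule spatial_le[OF fr sp])
        fix z assume z: "z \<in> ?Y" "inf c d \<in> z"
        then have "c \<in> z" "d \<in> z" using pf_inf YL_prime[OF fr z(1)] by blast+
        then have "z \<in> U" "z \<in> ?Y - U" using c d z(1) phiY by blast+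
        then show "bot \<in> z" by blast
      qed
      then have "inf c d = bot" by (simp add: bot_unique)
      then have dpc: "d \<le> pseudocompl c" unfolding pseudocompl_def by (simp add: Sup_upper)
      have "top \<le> sup c d"
      proof (rule spatial_le[OF fr sp])
        fix z assume z: "z \<in> ?Y" "top \<in> z"
        have "z \<in> U \<or> z \<in> ?Y - U" using z(1) by blast
        then have "c \<in> z \<or> d \<in> z" using c d z(1) phiY by blast
        then show "sup c d \<in> z" using pf_sup YL_prime[OF fr z(1)] by blast
      qed
      also have "\<dots> \<le> sup c (pseudocompl c)" using dpc by (simp add: sup.coboundedI2)
      finally have cc: "complemented c" unfolding complemented_def by (simp add: top_unique)
      have "c \<le> a"
      proof (rule spatial_le[OF fr sp])
        fix z assume z: "z \<in> ?Y" "c \<in> z"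
        then have "z \<in> U" using c phiY by blast
        then show "a \<in> z" using U(4) z(1) phiY by blast
      qed
      then have "c \<in> C" using cc unfolding C_def by blast
      moreover have "c \<in> y" using U(3) c y phiY by blast
      ultimately show "Sup C \<in> y" using pf_Sup2 YL_prime[OF fr y] by blast
    qed
    then show "a = Sup {c. complemented c \<and> c \<le> a}" using ba unfolding C_def by (simp add: antisym)
  qed
  show ?thesis unfolding stone_frame_def using cf zd by blast
qed

theorem corollary5p18:
  assumes "frame TYPE('a::complete_lattice)"
  shows "(stone_frame TYPE('a) \<longleftrightarrow> stone_L_space (XL TYPE('a)) (\<subseteq>))
    \<and> (spatial_frame TYPE('a) \<longrightarrow>
         (stone_frame TYPE('a) \<longleftrightarrow> stone_space (spatial_part (XL TYPE('a)) (\<subseteq>))))"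
  using part1_fwd[OF assms] part1_bwd[OF assms] part2_fwd[OF assms] part2_bwd[OF assms] by blast

end
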